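(* Let $\mathcal{F}=\{(X,\rho_1);f_1,\dots,f_N\}$ and $\mathcal{G}=\{(Y,\rho_2);g_1,\dots,g_N\}$ be IFSs on complete metric spaces with $\rho_1(f_i(x),f_i(x'))=c_i\rho_1(x,x')$ and $\rho_2(g_i(y),g_i(y'))\le r_i\rho_2(y,y')$ for all $x,x'\in X$, $y,y'\in Y$, where $c_i,r_i\in(0,1)$. If $c_i\le r_i$ for all $i$ and $\mathcal{F}$ satisfies the strong open set condition, then $s_0\le\dim_H G(T_{\mathcal{FG}})\le t_0$, where $\sum_{i=1}^Nr_i^{t_0}=1$ and $\sum_{i=1}^Nc_i^{s_0}=1$.
   Context: $X\times Y$ carries the metric $\mathcal{D}((x,y),(x',y'))=\max\{\rho_1(x,x'),\rho_2(y,y')\}$. Attractor $A_\mathcal{F}$: unique nonempty compact $A$ with $A=\bigcup f_i(A)$. Code space $\Omega=\{1,\dots,N\}^{\mathbb{N}}$ ordered lexicographically; address map $\phi_\mathcal{F}(\sigma)=\lim_kf_{\sigma_1}\circ\cdots\circ f_{\sigma_k}(x)$; tops function $\tau_\mathcal{F}(x)=\max\{\sigma:\phi_\mathcal{F}(\sigma)=x\}$; fractal transformation $T_{\mathcal{FG}}=\phi_\mathcal{G}\circ\tau_\mathcal{F}:A_\mathcal{F}\to A_\mathcal{G}$; $G(T_{\mathcal{FG}})=\{(x,T_{\mathcal{FG}}(x)):x\in A_\mathcal{F}\}$. SOSC: a nonempty open $U$ with $f_i(U)\subset U$, $f_i(U)\cap f_j(U)=\emptyset$ for $i\ne j$, $U\cap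 A_\mathcal{F}\ne\emptyset$. *)

theory Defs
  imports "HOL-Analysis.Analysis"
begin

text \<open>An IFS is given by a number N and maps f i, i in {1..N}, on the
  ambient type (the whole metric space X).\<close>

definition attractor :: "nat \<Rightarrow> (nat \<Rightarrow> 'a::metric_space \<Rightarrow> 'a) \<Rightarrow> 'a set" where
  "attractor N f = (THE A. A \<noteq> {} \<and> compact A \<and> A = (\<Union>i\<in>{1..N}. f i ` A))"

text \<open>Code space: sequences sigma with sigma k in {1..N}; sigma 0 is sigma_1.\<close>
definition code_space :: "nat \<Rightarrow> (nat \<Rightarrow> nat) set" where
  "code_space N = {\<sigma>. \<forall>k. \<sigma> k \<in> {1..N}}"

definition lex_less :: "(nat \<Rightarrow> nat) \<Rightarrow> (nat \<Rightarrow> nat) \<Rightarrow> bool" where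
  "lex_less \<sigma> \<tau> = (\<exists>k. (\<forall>j<k. \<sigma> j = \<tau> j) \<and> \<sigma> k < \<tau> k)"

definition lex_le :: "(nat \<Rightarrow> nat) \<Rightarrow> (nat \<Rightarrow> nat) \<Rightarrow> bool" where
  "lex_le \<sigma> \<tau> = (\<sigma> = \<tau> \<or> lex_less \<sigma> \<tau>)"

primrec fcomp :: "(nat \<Rightarrow> 'a \<Rightarrow> 'a) \<Rightarrow> (nat \<Rightarrow> nat) \<Rightarrow> nat \<Rightarrow> 'a \<Rightarrow> 'a" where
  "fcomp f \<sigma> 0 = id"
| "fcomp f \<sigma> (Suc k) = fcomp f \<sigma> k \<circ> f (\<sigma> k)"

definition address :: "(nat \<Rightarrow> 'a::metric_space \<Rightarrow> 'a) \<Rightarrow> (nat \<Rightarrow> nat) \<Rightarrow> 'a" where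
  "address f \<sigma> = (THE y. \<forall>x. (\<lambda>k. fcomp f \<sigma> k x) \<longlonglongrightarrow> y)"

definition tops :: "nat \<Rightarrow> (nat \<Rightarrow> 'a::metric_space \<Rightarrow> 'a) \<Rightarrow> 'a \<Rightarrow> (nat \<Rightarrow> nat)" where
  "tops N f x = (THE \<sigma>. \<sigma> \<in> code_space N \<and> address f \<sigma> = x \<and>
      (\<forall>\<tau>\<in>code_space N. address f \<tau> = x \<longrightarrow> lex_le \<tau> \<sigma>))"

definition fractal_transformation ::
  "nat \<Rightarrow> (nat \<Rightarrow> 'a::metric_space \<Rightarrow> 'a) \<Rightarrow> (nat \<Rightarrow> 'b::metric_space \<Rightarrow> 'b) \<Rightarrow> 'a \<Rightarrow> 'b" where
  "fractal_transformation N f g x = address g (tops N f x)"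

definition fractal_graph ::
  "nat \<Rightarrow> (nat \<Rightarrow> 'a::metric_space \<Rightarrow> 'a) \<Rightarrow> (nat \<Rightarrow> 'b::metric_space \<Rightarrow> 'b) \<Rightarrow> ('a \<times> 'b) set" where
  "fractal_graph N f g = {(x, fractal_transformation N f g x) | x. x \<in> attractor N f}"

definition SOSC :: "nat \<Rightarrow> (nat \<Rightarrow> 'a::metric_space \<Rightarrow> 'a) \<Rightarrow> bool" where
  "SOSC N f = (\<exists>U. open U \<and> U \<noteq> {} \<and> (\<forall>i\<in>{1..N}. f i ` U \<subseteq> U) \<and>
     (\<forall>i\<in>{1..N}. \<forall>j\<in>{1..N}. i \<noteq> j \<longrightarrow> f i ` U \<inter> f j ` U = {}) \<and>
     U \<inter> attractor N f \<noteq> {})"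

definition max_dist :: "'a::metric_space \<times> 'b::metric_space \<Rightarrow> 'a \<times> 'b \<Rightarrow> real" where
  "max_dist p q = max (dist (fst p) (fst q)) (dist (snd p) (snd q))"

definition ddiam :: "('c \<Rightarrow> 'c \<Rightarrow> real) \<Rightarrow> 'c set \<Rightarrow> real" where
  "ddiam d U = (if U = {} then 0 else Sup {d x y | x y. x \<in> U \<and> y \<in> U})"

definition diam_pow :: "('c \<Rightarrow> 'c \<Rightarrow> real) \<Rightarrow> real \<Rightarrow> 'c set \<Rightarrow> ennreal" where
  "diam_pow d s U = (if U = {} then 0 else if s = 0 then 1 else ennreal (ddiam d U powr s))"

definition delta_cover :: "('c \<Rightarrow> 'c \<Rightarrow> real) \<Rightarrow> real \<Rightarrow> 'c set \<Rightarrow> (nat \<Rightarrow> 'c set) \<Rightarrow> bool" where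
  "delta_cover d \<delta> E U = (E \<subseteq> (\<Union>k. U k) \<and> (\<forall>k. \<forall>x\<in>U k. \<forall>y\<in>U k. d x y \<le> \<delta>))"

definition hausdorff_measure :: "('c \<Rightarrow> 'c \<Rightarrow> real) \<Rightarrow> real \<Rightarrow> 'c set \<Rightarrow> ennreal" where
  "hausdorff_measure d s E =
     (SUP \<delta>\<in>{0<..}. INF U\<in>{U. delta_cover d \<delta> E U}. (\<Sum>k. diam_pow d s (U k)))"

definition hausdorff_dim :: "('c \<Rightarrow> 'c \<Rightarrow> real) \<Rightarrow> 'c set \<Rightarrow> ereal" where
  "hausdorff_dim d E = Inf {ereal s | s. s \<ge> 0 \<and> hausdorff_measure d s E = 0}"

end

theory Submission
  imports Defs
begin


lemma codes_compact:
  "compact {u::nat\<Rightarrow>nat. \<forall>i. u i \<in> S}" if "finite S"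
proof -
  have "{u::nat\<Rightarrow>nat. \<forall>i. u i \<in> S} = PiE UNIV (\<lambda>_. S)" by (auto simp: PiE_def Pi_def extensional_def)
  moreover have "compactin (product_topology (\<lambda>_. euclidean) UNIV) (PiE UNIV (\<lambda>_::nat. S))"
    using that by (simp add: compactin_PiE finite_imp_compact)
  ultimately show ?thesis by (simp add: euclidean_product_topology)
qed

lemma cyl_open: "open {u::nat\<Rightarrow>nat. \<forall>i<length \<rho>. u i = \<rho>!i}"
proof -
  have "open {u::nat\<Rightarrow>nat. \<forall>i\<in>{..<length \<rho>}. u (id i) \<in> {\<rho>!i}}"
    by (rule product_topology_basis') (auto simp: open_discrete)
  moreover have "{u::nat\<Rightarrow>nat. \<forall>i\<in>{..<length \<rho>}. u (id i) \<in> {\<rho>!i}} = {u::nat\<Rightarrow>nat. \<forall>i<length \<rho>. u i = \<rho>!i}" by auto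
  ultimately show ?thesis by simp
qed


definition wt :: "(nat \<Rightarrow> real) \<Rightarrow> nat list \<Rightarrow> real" where
  "wt p \<rho> = (\<Prod>i<length \<rho>. p (\<rho>!i))"

lemma wt_Nil[simp]: "wt p [] = 1" by (simp add: wt_def)
lemma wt_Cons[simp]: "wt p (j#\<rho>) = p j * wt p \<rho>"
  unfolding wt_def length_Cons prod.lessThan_Suc_shift by simp

lemma wt_nonneg: "\<forall>j<m. 0 \<le> p j \<Longrightarrow> set \<rho> \<subseteq> {..<m} \<Longrightarrow> 0 \<le> wt p \<rho>"
  unfolding wt_def by (rule prod_nonneg) (auto simp: subset_iff)

lemma fan_sum:
  assumes p: "\<forall>j<m. 0 \<le> p j" "(\<Sum>j<m. p j) = 1"
  shows "finite R \<Longrightarrow> (\<forall>\<rho>\<in>R. set \<rho> \<subseteq> {..<m}) \<Longrightarrow>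
    (\<forall>w. length w = L \<and> set w \<subseteq> {..<m} \<longrightarrow> (\<exists>\<rho>\<in>R. \<exists>v. w = \<rho> @ v)) \<Longrightarrow>
    1 \<le> (\<Sum>\<rho>\<in>R. wt p \<rho>)"
proof (induction L arbitrary: R)
  case 0
  then have "[] \<in> R" by auto
  then have "wt p [] \<le> (\<Sum>\<rho>\<in>R. wt p \<rho>)"
    using 0 by (intro member_le_sum) (auto intro: wt_nonneg[OF p(1)])
  then show ?case by simp
next
  case (Suc L)
  show ?case
  proof (cases "[] \<in> R")
    case True
    then have "wt p [] \<le> (\<Sum>\<rho>\<in>R. wt p \<rho>)"
      using Suc by (intro member_le_sum) (auto intro: wt_nonneg[OF p(1)])
    then show ?thesis by simp
  next
    case False
    define RR where "RR j = {\<rho>. j#\<rho> \<in> R}" for j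
    have finRR: "finite (RR j)" for j
    proof -
      have "inj (Cons j)" by (auto simp: inj_def)
      then have "finite (Cons j -` R)" using Suc.prems(1) by (rule finite_vimageI[rotated])
      then show ?thesis by (simp add: RR_def vimage_def)
    qed
    have IH: "1 \<le> (\<Sum>\<rho>\<in>RR j. wt p \<rho>)" if j: "j < m" for j
    proof (rule Suc.IH[OF finRR])
      show "\<forall>\<rho>\<in>RR j. set \<rho> \<subseteq> {..<m}"
      proof
        fix \<rho> assume "\<rho> \<in> RR j"
        then have "j#\<rho> \<in> R" by (simp add: RR_def)
        then have "set (j#\<rho>) \<subseteq> {..<m}" using Suc.prems(2) by blast
        then show "set \<rho> \<subseteq> {..<m}" by simp
      qed
      show "\<forall>w. length w = L \<and> set w \<subseteq> {..<m} \<longrightarrow> (\<exists>\<rho>\<in>RR j. \<exists>v. w = \<rho> @ v)"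
      proof (intro allI impI)
        fix w assume w: "length w = L \<and> set w \<subseteq> {..<m}"
        then have "length (j#w) = Suc L \<and> set (j#w) \<subseteq> {..<m}" using j by auto
        then obtain \<rho> v where "\<rho> \<in> R" "j#w = \<rho> @ v" using Suc.prems(3) by blast
        moreover then obtain \<rho>' where "\<rho> = j#\<rho>'" using False by (cases \<rho>) auto
        ultimately show "\<exists>\<rho>\<in>RR j. \<exists>v. w = \<rho> @ v" by (auto simp: RR_def)
      qed
    qed
    have sub: "(\<Union>j<m. Cons j ` RR j) \<subseteq> R" by (auto simp: RR_def)
    have "1 = (\<Sum>j<m. p j * 1)" using p by simp
    also have "\<dots> \<le> (\<Sum>j<m. p j * (\<Sum>\<rho>\<in>RR j. wt p \<rho>))"
      using IH p(1) by (intro sum_mono mult_left_mono) auto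
    also have "\<dots> = (\<Sum>j<m. \<Sum>\<rho>\<in>Cons j ` RR j. wt p \<rho>)"
      by (subst sum.reindex) (auto simp: sum_distrib_left)
    also have "\<dots> = (\<Sum>\<rho>\<in>(\<Union>j<m. Cons j ` RR j). wt p \<rho>)"
      by (rule sum.UNION_disjoint[symmetric]) (auto simp: finRR)
    also have "\<dots> \<le> (\<Sum>\<rho>\<in>R. wt p \<rho>)"
      using sub Suc.prems(1,2) by (intro sum_mono2) (auto intro: wt_nonneg[OF p(1)])
    finally show ?thesis .
  qed
qed


lemma lcp_exists:
  assumes "u \<in> F" "v \<in> F" "u \<noteq> (v::nat\<Rightarrow>nat)"
  obtains ll x y where "x\<in>F" "y\<in>F" "\<forall>z\<in>F. \<forall>i<ll. z i = u i" "\<forall>i<ll. x i = y i" "x ll \<noteq> y ll"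
proof -
  obtain i0 where i0: "u i0 \<noteq> v i0" using assms(3) by (meson ext)
  define D where "D = {ll. \<forall>z\<in>F. \<forall>i<ll. z i = u i}"
  have "0 \<in> D" by (simp add: D_def)
  have Dsub: "D \<subseteq> {..i0}"
  proof
    fix l assume "l \<in> D"
    show "l \<in> {..i0}"
    proof (rule ccontr)
      assume "l \<notin> {..i0}"
      then have "i0 < l" by simp
      then have "v i0 = u i0" using \<open>l\<in>D\<close> assms(2) by (auto simp: D_def)
      then show False using i0 by simp
    qed
  qed
  have finD: "finite D" using Dsub finite_subset by blast
  define ll where "ll = Max D"
  have lD: "ll \<in> D" unfolding ll_def using finD \<open>0\<in>D\<close> by (intro Max_in) auto
  have "Suc ll \<notin> D"
  proof
    assume "Suc ll \<in> D"
    then have "Suc ll \<le> ll" unfolding ll_def using finD by (rule Max_ge[rotated])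
    then show False by simp
  qed
  then obtain z where z: "z \<in> F" "\<not> (\<forall>i<Suc ll. z i = u i)" by (auto simp: D_def)
  have zl: "\<forall>i<ll. z i = u i" using lD z(1) by (auto simp: D_def)
  then have "z ll \<noteq> u ll" using z(2) less_Suc_eq by auto
  have all: "\<forall>z\<in>F. \<forall>i<ll. z i = u i" using lD by (simp add: D_def)
  have "\<forall>i<ll. z i = u i" using zl .
  show thesis by (rule that[of z u ll]) (fact z(1), fact assms(1), fact all, fact, fact)
qed

lemma ddiam_ge:
  assumes "x \<in> U" "y \<in> U" "\<And>x y. x \<in> U \<Longrightarrow> y \<in> U \<Longrightarrow> d x y \<le> \<delta>"
  shows "d x y \<le> ddiam d U"
proof -
  have "U \<noteq> {}" using assms by auto
  have "d x y \<in> {d x y |x y. x \<in> U \<and> y \<in> U}" using assms(1,2) by blast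
  moreover have "bdd_above {d x y |x y. x \<in> U \<and> y \<in> U}"
    by (rule bdd_aboveI[where M=\<delta>]) (use assms(3) in blast)
  ultimately have "d x y \<le> Sup {d x y |x y. x \<in> U \<and> y \<in> U}" by (rule cSup_upper)
  then show ?thesis using \<open>U \<noteq> {}\<close> unfolding ddiam_def by simp
qed

lemma mass:
  fixes \<Psi> :: "(nat \<Rightarrow> nat) \<Rightarrow> 'z" and d :: "'z \<Rightarrow> 'z \<Rightarrow> real" and a :: "nat \<Rightarrow> real"
  assumes m: "0 < m" and s: "0 < s" and g: "0 < g"
    and a: "\<forall>j<m. 0 < a j \<and> a j < 1"
    and S: "1 \<le> (\<Sum>j<m. a j powr s)"
    and sep: "\<And>u v k. (\<forall>i. u i < m) \<Longrightarrow> (\<forall>i. v i < m) \<Longrightarrow> (\<forall>i<k. u i = v i) \<Longrightarrow> u k \<noteq> v k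
        \<Longrightarrow> g * (\<Prod>i<k. a (u i)) \<le> d (\<Psi> u) (\<Psi> v)"
    and cov: "\<And>u. (\<forall>i. u i < m) \<Longrightarrow> \<Psi> u \<in> (\<Union>k. U k)"
    and bd: "\<And>k x y. x \<in> U k \<Longrightarrow> y \<in> U k \<Longrightarrow> d x y \<le> \<delta>"
  shows "ennreal (g powr s / 2) \<le> (\<Sum>k. diam_pow d s (U k))"
proof -
  define C where "C = {u::nat\<Rightarrow>nat. \<forall>i. u i \<in> {..<m}}"
  define Sm where "Sm = (\<Sum>j<m. a j powr s)"
  define p where "p j = a j powr s / Sm" for j
  have Sm: "1 \<le> Sm" using S by (simp add: Sm_def)
  have p0: "\<forall>j<m. 0 \<le> p j" using Sm by (simp add: p_def)
  have p1: "(\<Sum>j<m. p j) = 1" using Sm by (simp add: p_def sum_divide_distrib[symmetric] Sm_def)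
  have pa: "p j \<le> a j powr s" if "j < m" for j
  proof -
    have "a j powr s / Sm \<le> a j powr s / 1" using Sm by (intro divide_left_mono) auto
    then show ?thesis by (simp add: p_def)
  qed
  have plt: "p j < 1" if "j < m" for j
  proof -
    have "a j powr s < 1 powr s" using a that s by (intro powr_less_mono2) auto
    then show ?thesis using pa[OF that] by simp
  qed
  define pmax where "pmax = Max (p ` {..<m})"
  have pmax_ge: "p j \<le> pmax" if "j < m" for j unfolding pmax_def using that by (intro Max_ge) auto
  have pmax_lt: "pmax < 1" unfolding pmax_def using m plt by (subst Max_less_iff) auto
  define F where "F k = {u \<in> C. \<Psi> u \<in> U k}" for k
  define multi where "multi k = (\<exists>u\<in>F k. \<exists>v\<in>F k. u \<noteq> v)" for k
  define cyl where "cyl \<rho> = {u::nat\<Rightarrow>nat. \<forall>i<length \<rho>. u i = \<rho>!i}" for \<rho>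
  define P where "P k r = (set r \<subseteq> {..<m} \<and> F k \<subseteq> cyl r \<and>
     (multi k \<longrightarrow> wt p r * g powr s \<le> ddiam d (U k) powr s) \<and>
     (\<not> multi k \<and> F k \<noteq> {} \<longrightarrow> wt p r \<le> (1/2)^(k+2)))" for k r
  have "\<exists>r. P k r" for k
  proof (cases "multi k")
    case True
    then obtain u v where uv: "u \<in> F k" "v \<in> F k" "u \<noteq> v" unfolding multi_def by blast
    obtain ll x y where lxy: "x\<in>F k" "y\<in>F k" "\<forall>z\<in>F k. \<forall>i<ll. z i = u i" "\<forall>i<ll. x i = y i" "x ll \<noteq> y ll"
      by (rule lcp_exists[OF uv])
    define r where "r = map u [0..<ll]"
    have uC: "u \<in> C" using uv by (simp add: F_def)
    have xC: "x \<in> C" "y \<in> C" using lxy by (auto simp: F_def)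
    have h1: "set r \<subseteq> {..<m}" using uC by (auto simp: r_def C_def)
    have h2: "F k \<subseteq> cyl r" using lxy(3) by (auto simp: cyl_def r_def)
    have h3: "wt p r * g powr s \<le> ddiam d (U k) powr s"
    proof -
      have xu: "\<forall>i<ll. x i = u i" using lxy by auto
      have "g * (\<Prod>i<ll. a (x i)) \<le> d (\<Psi> x) (\<Psi> y)"
        using sep[of x y ll] xC lxy by (auto simp: C_def)
      also have "\<dots> \<le> ddiam d (U k)"
        using lxy(1,2) by (intro ddiam_ge[where \<delta>=\<delta>]) (auto simp: F_def bd)
      finally have dd: "g * (\<Prod>i<ll. a (u i)) \<le> ddiam d (U k)" using xu by simp
      have wtr: "wt p r = (\<Prod>i<ll. p (u i))" by (simp add: wt_def r_def)
      have "wt p r \<le> (\<Prod>i<ll. a (u i) powr s)" unfolding wtr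
        using uC p0 pa by (intro prod_mono) (auto simp: C_def)
      also have "\<dots> = (\<Prod>i<ll. a (u i)) powr s" by (simp add: prod_powr_distrib)
      finally have W: "wt p r * g powr s \<le> (\<Prod>i<ll. a (u i)) powr s * g powr s"
        by (simp add: mult_right_mono)
      have au: "0 \<le> a (u i)" for i using a uC by (auto simp: C_def less_imp_le)
      have pr0: "0 \<le> (\<Prod>i<ll. a (u i))" using au by (intro prod_nonneg) auto
      have "(\<Prod>i<ll. a (u i)) powr s * g powr s = (g * (\<Prod>i<ll. a (u i))) powr s"
        using g pr0 by (simp add: powr_mult)
      also have "\<dots> \<le> ddiam d (U k) powr s"
        using dd g pr0 s by (intro powr_mono2) auto
      finally show ?thesis using W by linarith
    qed
    have "P k r" unfolding P_def using h1 h2 h3 True by simp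
    then show ?thesis by blast
  next
    case False
    show ?thesis
    proof (cases "F k = {}")
      case True
      have "P k []" using True False unfolding P_def by simp
      then show ?thesis by blast
    next
      case Fne: False
      then obtain u where u: "u \<in> F k" by auto
      then have Fk: "F k = {u}" using False by (auto simp: multi_def)
      have uC: "u \<in> C" using u by (simp add: F_def)
      obtain ll where l: "pmax ^ ll < (1/2)^(k+2)" using real_arch_pow_inv[OF _ pmax_lt, of "(1/2)^(k+2)"] by auto
      define r where "r = map u [0..<ll]"
      have "wt p r = (\<Prod>i<ll. p (u i))" by (simp add: wt_def r_def)
      also have "\<dots> \<le> (\<Prod>i<ll. pmax)" using uC p0 pmax_ge by (intro prod_mono) (auto simp: C_def)
      also have "\<dots> = pmax ^ ll" by simp
      finally have h3: "wt p r \<le> (1/2)^(k+2)" using l by simp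
      have h1: "set r \<subseteq> {..<m}" using uC by (auto simp: r_def C_def)
      have h2: "F k \<subseteq> cyl r" using Fk by (auto simp: cyl_def r_def)
      have "P k r" unfolding P_def using h1 h2 h3 False Fne by simp
      then show ?thesis by blast
    qed
  qed
  then have "\<forall>k. \<exists>r. P k r" by blast
  then obtain \<rho> where \<rho>: "\<And>k. P k (\<rho> k)" using choice by blast
  have compC: "compact C" unfolding C_def by (rule codes_compact) simp
  have opn: "open (cyl (\<rho> k))" for k unfolding cyl_def by (rule cyl_open)
  have covC: "C \<subseteq> (\<Union>k\<in>{k. F k \<noteq> {}}. cyl (\<rho> k))"
  proof
    fix u assume u: "u \<in> C"
    then obtain k where "\<Psi> u \<in> U k" using cov by (auto simp: C_def)
    then have "u \<in> F k" using u by (simp add: F_def)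
    then show "u \<in> (\<Union>k\<in>{k. F k \<noteq> {}}. cyl (\<rho> k))" using \<rho>[of k] by (auto simp: P_def)
  qed
  obtain K where K: "K \<subseteq> {k. F k \<noteq> {}}" "finite K" "C \<subseteq> (\<Union>k\<in>K. cyl (\<rho> k))"
    apply (rule compactE_image[OF compC _ covC]) using opn by auto
  define L where "L = Max (insert 0 (length ` \<rho> ` K))"
  have Lge: "length (\<rho> k) \<le> L" if "k \<in> K" for k unfolding L_def using K(2) that by (intro Max_ge) auto
  have fan: "1 \<le> (\<Sum>r\<in>\<rho> ` K. wt p r)"
  proof (rule fan_sum[OF p0 p1])
    show "finite (\<rho> ` K)" using K by simp
    show "\<forall>r\<in>\<rho> ` K. set r \<subseteq> {..<m}" using \<rho> by (auto simp: P_def)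
    show "\<forall>w. length w = L \<and> set w \<subseteq> {..<m} \<longrightarrow> (\<exists>r\<in>\<rho> ` K. \<exists>v. w = r @ v)"
    proof (intro allI impI)
      fix w assume w: "length w = L \<and> set w \<subseteq> {..<m}"
      define u where "u i = (if i < L then w!i else 0)" for i
      have "u \<in> C" using w m by (auto simp: C_def u_def) (meson lessThan_iff nth_mem subsetD)
      then obtain k where k: "k \<in> K" "u \<in> cyl (\<rho> k)" using K(3) by auto
      have "take (length (\<rho> k)) w = \<rho> k"
        using k Lge[OF k(1)] w by (intro nth_equalityI) (auto simp: cyl_def u_def)
      then have "w = \<rho> k @ drop (length (\<rho> k)) w" by (metis append_take_drop_id)
      then show "\<exists>r\<in>\<rho> ` K. \<exists>v. w = r @ v" using k by blast
    qed
  qed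
  also have "\<dots> \<le> (\<Sum>k\<in>K. wt p (\<rho> k))"
  proof -
    have "\<And>i. i \<in> K \<Longrightarrow> 0 \<le> wt p (\<rho> i)"
      using \<rho> p0 by (intro wt_nonneg[of m]) (auto simp: P_def)
    then show ?thesis using sum_image_le[OF K(2), of "wt p" \<rho>] by (simp add: o_def)
  qed
  also have "\<dots> = (\<Sum>k\<in>K \<inter> {k. multi k}. wt p (\<rho> k)) + (\<Sum>k\<in>K - {k. multi k}. wt p (\<rho> k))"
    using K(2) by (rule sum.Int_Diff)
  also have "(\<Sum>k\<in>K - {k. multi k}. wt p (\<rho> k)) \<le> (\<Sum>k\<in>K - {k. multi k}. (1/2)^(k+2))"
  proof (intro sum_mono)
    fix k assume "k \<in> K - {k. multi k}"
    then have "\<not> multi k \<and> F k \<noteq> {}" using K(1) by auto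
    then show "wt p (\<rho> k) \<le> (1/2)^(k+2)" using \<rho>[of k] unfolding P_def by blast
  qed
  also have "\<dots> \<le> (\<Sum>k. (1/2::real)^(k+2))"
    using K(2) by (intro sum_le_suminf) (auto intro!: summable_mult2 summable_geometric simp: power_add)
  also have "(\<Sum>k. (1/2::real)^(k+2)) = 1/2"
  proof -
    have "(\<Sum>k. (1/2::real)^(k+2)) = (\<Sum>k. (1/2::real)^k * (1/4))" by (simp add: power_add)
    also have "\<dots> = (\<Sum>k. (1/2::real)^k) * (1/4)" by (rule suminf_mult2[symmetric]) (auto intro: summable_geometric)
    also have "\<dots> = 1/2" by (simp add: suminf_geometric)
    finally show ?thesis .
  qed
  finally have half: "1/2 \<le> (\<Sum>k\<in>K \<inter> {k. multi k}. wt p (\<rho> k))" by simp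
  have "g powr s / 2 \<le> (\<Sum>k\<in>K \<inter> {k. multi k}. wt p (\<rho> k)) * g powr s"
  proof -
    have "(1/2) * g powr s \<le> (\<Sum>k\<in>K \<inter> {k. multi k}. wt p (\<rho> k)) * g powr s"
      using half by (intro mult_right_mono) auto
    then show ?thesis by simp
  qed
  also have "\<dots> = (\<Sum>k\<in>K \<inter> {k. multi k}. wt p (\<rho> k) * g powr s)" by (simp add: sum_distrib_right)
  also have "\<dots> \<le> (\<Sum>k\<in>K \<inter> {k. multi k}. ddiam d (U k) powr s)"
    using \<rho> by (intro sum_mono) (auto simp: P_def)
  finally have R: "g powr s / 2 \<le> (\<Sum>k\<in>K \<inter> {k. multi k}. ddiam d (U k) powr s)" .
  have "ennreal (g powr s / 2) \<le> ennreal (\<Sum>k\<in>K \<inter> {k. multi k}. ddiam d (U k) powr s)"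
    using R by (rule ennreal_leI)
  also have "\<dots> = (\<Sum>k\<in>K \<inter> {k. multi k}. ennreal (ddiam d (U k) powr s))" by simp
  also have "\<dots> = (\<Sum>k\<in>K \<inter> {k. multi k}. diam_pow d s (U k))"
  proof (intro sum.cong refl)
    fix k assume "k \<in> K \<inter> {k. multi k}"
    then have "U k \<noteq> {}" by (auto simp: multi_def F_def)
    then show "ennreal (ddiam d (U k) powr s) = diam_pow d s (U k)" using s by (simp add: diam_pow_def)
  qed
  also have "\<dots> \<le> (\<Sum>k. diam_pow d s (U k))"
    using K(2) by (intro sum_le_suminf) auto
  finally show ?thesis .
qed


lemma fcomp_add: "fcomp f \<sigma> (n + k) = fcomp f \<sigma> n \<circ> fcomp f (\<lambda>j. \<sigma> (j + n)) k"
  by (induction k) (auto simp: add.commute)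

lemma fcomp_cong: "(\<forall>i<n. \<sigma> i = \<tau> i) \<Longrightarrow> fcomp f \<sigma> n = fcomp f \<tau> n"
  by (induction n) auto

lemma fcomp_Suc0: "fcomp f \<sigma> (Suc k) = f (\<sigma> 0) \<circ> fcomp f (\<lambda>j. \<sigma> (Suc j)) k"
  using fcomp_add[of f \<sigma> 1 k] by simp

lemma sandwich0:
  fixes g h :: "nat \<Rightarrow> real"
  assumes "\<And>k. 0 \<le> g k" "\<And>k. g k \<le> h k" "h \<longlonglongrightarrow> 0"
  shows "g \<longlonglongrightarrow> 0"
proof (rule tendsto_sandwich[of "\<lambda>_. 0" g sequentially h 0])
  show "\<forall>\<^sub>F n in sequentially. 0 \<le> g n" by (rule always_eventually) (use assms(1) in blast)
  show "\<forall>\<^sub>F n in sequentially. g n \<le> h n" by (rule always_eventually) (use assms(2) in blast)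
qed (use assms(3) in auto)

lemma lip_tendsto:
  assumes "\<And>x y. dist (h x) (h y) \<le> L * dist x y" "X \<longlonglongrightarrow> l"
  shows "(\<lambda>k. h (X k)) \<longlonglongrightarrow> h l"
proof -
  have "(\<lambda>k. dist (X k) l) \<longlonglongrightarrow> 0" using assms(2) by (rule tendsto_dist_iff[THEN iffD1])
  then have "(\<lambda>k. L * dist (X k) l) \<longlonglongrightarrow> 0" by (rule tendsto_mult_right_zero)
  then have "(\<lambda>k. dist (h (X k)) (h l)) \<longlonglongrightarrow> 0"
    by (rule sandwich0[OF zero_le_dist assms(1)])
  then show ?thesis by (rule tendsto_dist_iff[THEN iffD2])
qed

definition ccons :: "nat \<Rightarrow> (nat \<Rightarrow> nat) \<Rightarrow> nat \<Rightarrow> nat" where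
  "ccons i \<sigma> = (\<lambda>j. case j of 0 \<Rightarrow> i | Suc j \<Rightarrow> \<sigma> j)"

locale ifs =
  fixes N :: nat and f :: "nat \<Rightarrow> 'a::complete_space \<Rightarrow> 'a" and lc :: "nat \<Rightarrow> real" and q :: real
  assumes N: "1 \<le> N" and q1: "q < 1"
    and lc: "\<And>i. i \<in> {1..N} \<Longrightarrow> 0 \<le> lc i \<and> lc i \<le> q"
    and lip: "\<And>i x y. i \<in> {1..N} \<Longrightarrow> dist (f i x) (f i y) \<le> lc i * dist x y"
begin

lemma q0: "0 \<le> q" using lc[of 1] N by auto

lemma codesD: "\<sigma> \<in> code_space N \<Longrightarrow> \<sigma> k \<in> {1..N}" by (simp add: code_space_def)

lemma codes_shift: "\<sigma> \<in> code_space N \<Longrightarrow> (\<lambda>j. \<sigma> (j + n)) \<in> code_space N"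
  by (simp add: code_space_def)

lemma codes_ne: "(\<lambda>_. 1) \<in> code_space N" using N by (simp add: code_space_def)

lemma fcomp_lip_prod:
  "\<forall>i<k. \<sigma> i \<in> {1..N} \<Longrightarrow> dist (fcomp f \<sigma> k x) (fcomp f \<sigma> k y) \<le> (\<Prod>i<k. lc (\<sigma> i)) * dist x y"
proof (induction k arbitrary: x y)
  case 0 then show ?case by simp
next
  case (Suc k)
  have nn: "0 \<le> (\<Prod>i<k. lc (\<sigma> i))" using Suc.prems lc by (intro prod_nonneg) auto
  have "dist (fcomp f \<sigma> (Suc k) x) (fcomp f \<sigma> (Suc k) y) = dist (fcomp f \<sigma> k (f (\<sigma> k) x)) (fcomp f \<sigma> k (f (\<sigma> k) y))"
    by simp
  also have "\<dots> \<le> (\<Prod>i<k. lc (\<sigma> i)) * dist (f (\<sigma> k) x) (f (\<sigma> k) y)" using Suc by auto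
  also have "\<dots> \<le> (\<Prod>i<k. lc (\<sigma> i)) * (lc (\<sigma> k) * dist x y)"
    using nn lip Suc.prems by (intro mult_left_mono) auto
  also have "\<dots> = (\<Prod>i<Suc k. lc (\<sigma> i)) * dist x y" by (simp add: mult.assoc)
  finally show ?case .
qed

lemma prod_lc_le: "\<forall>i<k. \<sigma> i \<in> {1..N} \<Longrightarrow> (\<Prod>i<k. lc (\<sigma> i)) \<le> q^k"
proof -
  assume a: "\<forall>i<k. \<sigma> i \<in> {1..N}"
  have "(\<Prod>i<k. lc (\<sigma> i)) \<le> (\<Prod>i<k. q)" using a lc by (intro prod_mono) auto
  then show ?thesis by simp
qed

lemma fcomp_lip:
  assumes "\<forall>i<k. \<sigma> i \<in> {1..N}"
  shows "dist (fcomp f \<sigma> k x) (fcomp f \<sigma> k y) \<le> q^k * dist x y"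
  using fcomp_lip_prod[OF assms, of x y] prod_lc_le[OF assms] mult_right_mono[OF prod_lc_le[OF assms], of "dist x y"]
  by simp

definition M :: "'a \<Rightarrow> real" where "M x = Max ((\<lambda>i. dist (f i x) x) ` {1..N})"

lemma M_ge: "i \<in> {1..N} \<Longrightarrow> dist (f i x) x \<le> M x"
  unfolding M_def by (intro Max_ge) auto

lemma M_nn: "0 \<le> M x" using M_ge[of 1 x] N by (meson atLeastAtMost_iff order.trans zero_le_dist order_refl)

lemma fcomp_bound:
  "\<forall>i. \<sigma> i \<in> {1..N} \<Longrightarrow> dist (fcomp f \<sigma> k x) x \<le> M x / (1 - q)"
proof (induction k arbitrary: \<sigma>)
  case 0 then show ?case using M_nn q1 by simp
next
  case (Suc k)
  let ?y = "fcomp f (\<lambda>j. \<sigma> (Suc j)) k x"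
  have IH: "dist ?y x \<le> M x / (1 - q)" using Suc by auto
  have s0: "\<sigma> 0 \<in> {1..N}" using Suc by auto
  have "dist (fcomp f \<sigma> (Suc k) x) x = dist (f (\<sigma> 0) ?y) x" by (simp only: fcomp_Suc0 o_apply)
  also have "\<dots> \<le> dist (f (\<sigma> 0) ?y) (f (\<sigma> 0) x) + dist (f (\<sigma> 0) x) x" by (rule dist_triangle)
  also have "\<dots> \<le> lc (\<sigma> 0) * dist ?y x + M x" using lip[OF s0] M_ge[OF s0] by (intro add_mono) auto
  also have "\<dots> \<le> q * (M x / (1 - q)) + M x"
    using lc[OF s0] IH by (intro add_mono mult_mono) auto
  also have "\<dots> = M x / (1 - q)" using q1 by (simp add: field_simps)
  finally show ?case .
qed

end

context ifs begin
lemma fcomp_cauchy: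
  assumes \<sigma>: "\<sigma> \<in> code_space N"
  shows "Cauchy (\<lambda>k. fcomp f \<sigma> k x)"
proof (rule metric_CauchyI)
  fix e :: real assume e: "0 < e"
  define C where "C = M x / (1 - q)"
  have C: "0 \<le> C" using M_nn q1 by (simp add: C_def)
  obtain K where K: "q^K < e / (C + 1)" using real_arch_pow_inv[OF _ q1, of "e / (C+1)"] e C by auto
  have key: "dist (fcomp f \<sigma> n x) (fcomp f \<sigma> m x) \<le> q^m * C" if "m \<le> n" for m n
  proof -
    obtain k where n: "n = m + k" using \<open>m \<le> n\<close> le_Suc_ex by blast
    have "dist (fcomp f \<sigma> n x) (fcomp f \<sigma> m x) = dist (fcomp f \<sigma> m (fcomp f (\<lambda>j. \<sigma> (j + m)) k x)) (fcomp f \<sigma> m x)"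
      by (simp add: n fcomp_add)
    also have "\<dots> \<le> q^m * dist (fcomp f (\<lambda>j. \<sigma> (j + m)) k x) x"
      using \<sigma> by (intro fcomp_lip) (auto simp: code_space_def)
    also have "\<dots> \<le> q^m * C" unfolding C_def
      using \<sigma> q0 by (intro mult_left_mono fcomp_bound) (auto simp: code_space_def)
    finally show ?thesis .
  qed
  have "q^K * C < e"
  proof -
    have "q^K * C \<le> q^K * (C + 1)" using q0 by (simp add: mult_left_mono)
    also have "\<dots> < e" using K C by (simp add: pos_less_divide_eq)
    finally show ?thesis .
  qed
  have "\<forall>m\<ge>K. \<forall>n\<ge>K. dist (fcomp f \<sigma> m x) (fcomp f \<sigma> n x) < e"
  proof (intro allI impI)
    fix m n assume mn: "K \<le> m" "K \<le> n"
    have qm: "q^m * C \<le> q^K * C" if "K \<le> m" for m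
      using that q0 q1 C by (intro mult_right_mono power_decreasing) auto
    show "dist (fcomp f \<sigma> m x) (fcomp f \<sigma> n x) < e"
    proof (cases "m \<le> n")
      case True
      then show ?thesis using key[OF True] qm[OF mn(1)] \<open>q^K * C < e\<close> by (simp add: dist_commute)
    next
      case False
      then show ?thesis using key[of n m] qm[OF mn(2)] \<open>q^K * C < e\<close> by simp
    qed
  qed
  then show "\<exists>M. \<forall>m\<ge>M. \<forall>n\<ge>M. dist (fcomp f \<sigma> m x) (fcomp f \<sigma> n x) < e" by blast
qed

lemma addr_conv:
  assumes \<sigma>: "\<sigma> \<in> code_space N"
  shows "(\<lambda>k. fcomp f \<sigma> k x) \<longlonglongrightarrow> address f \<sigma>"
proof -
  obtain y where y: "(\<lambda>k. fcomp f \<sigma> k x) \<longlonglongrightarrow> y"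
    using Cauchy_convergent[OF fcomp_cauchy[OF \<sigma>]] by (auto simp: convergent_def)
  have all: "(\<lambda>k. fcomp f \<sigma> k z) \<longlonglongrightarrow> y" for z
  proof -
    have "(\<lambda>k. dist (fcomp f \<sigma> k x) y) \<longlonglongrightarrow> 0" using y by (rule tendsto_dist_iff[THEN iffD1])
    moreover have "(\<lambda>k. q^k * dist z x) \<longlonglongrightarrow> 0"
      using q0 q1 by (intro tendsto_mult_left_zero LIMSEQ_power_zero) auto
    ultimately have "(\<lambda>k. q^k * dist z x + dist (fcomp f \<sigma> k x) y) \<longlonglongrightarrow> 0"
      using tendsto_add_zero by blast
    moreover have "dist (fcomp f \<sigma> k z) y \<le> q^k * dist z x + dist (fcomp f \<sigma> k x) y" for k
    proof -
      have "dist (fcomp f \<sigma> k z) y \<le> dist (fcomp f \<sigma> k z) (fcomp f \<sigma> k x) + dist (fcomp f \<sigma> k x) y"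
        by (rule dist_triangle)
      also have "\<dots> \<le> q^k * dist z x + dist (fcomp f \<sigma> k x) y"
        using \<sigma> by (intro add_mono fcomp_lip) (auto simp: code_space_def)
      finally show ?thesis .
    qed
    ultimately have "(\<lambda>k. dist (fcomp f \<sigma> k z) y) \<longlonglongrightarrow> 0"
      by (rule sandwich0[OF zero_le_dist, rotated])
    then show ?thesis by (rule tendsto_dist_iff[THEN iffD2])
  qed
  have "address f \<sigma> = y"
    unfolding address_def
  proof (rule the_equality)
    show "\<forall>z. (\<lambda>k. fcomp f \<sigma> k z) \<longlonglongrightarrow> y" using all by blast
    fix y' assume "\<forall>z. (\<lambda>k. fcomp f \<sigma> k z) \<longlonglongrightarrow> y'"
    then show "y' = y" using y LIMSEQ_unique by blast
  qed
  then show ?thesis using all by simp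
qed

lemma addr_shift:
  assumes \<sigma>: "\<sigma> \<in> code_space N"
  shows "address f \<sigma> = fcomp f \<sigma> n (address f (\<lambda>j. \<sigma> (j + n)))"
proof -
  fix x
  have "(\<lambda>k. fcomp f \<sigma> (k + n) x) \<longlonglongrightarrow> address f \<sigma>"
    using LIMSEQ_ignore_initial_segment[OF addr_conv[OF \<sigma>]] by simp
  moreover have "(\<lambda>k. fcomp f \<sigma> (k + n) x) = (\<lambda>k. fcomp f \<sigma> n (fcomp f (\<lambda>j. \<sigma> (j + n)) k x))"
    by (simp add: add.commute[of _ n] fcomp_add)
  moreover have "(\<lambda>k. fcomp f \<sigma> n (fcomp f (\<lambda>j. \<sigma> (j + n)) k x)) \<longlonglongrightarrow> fcomp f \<sigma> n (address f (\<lambda>j. \<sigma> (j + n)))"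
    by (rule lip_tendsto[of _ "q^n"]) (use \<sigma> in \<open>auto intro: fcomp_lip addr_conv codes_shift simp: code_space_def\<close>)
  ultimately show ?thesis using LIMSEQ_unique by metis
qed

lemma addr_Suc0:
  assumes \<sigma>: "\<sigma> \<in> code_space N"
  shows "address f \<sigma> = f (\<sigma> 0) (address f (\<lambda>j. \<sigma> (Suc j)))"
  using addr_shift[OF \<sigma>, of 1] by simp

lemma ccons_codes: "i \<in> {1..N} \<Longrightarrow> \<sigma> \<in> code_space N \<Longrightarrow> ccons i \<sigma> \<in> code_space N"
  by (auto simp: code_space_def ccons_def split: nat.splits)

lemma addr_cons:
  assumes "i \<in> {1..N}" "\<sigma> \<in> code_space N"
  shows "address f (ccons i \<sigma>) = f i (address f \<sigma>)"
proof -
  have "address f (ccons i \<sigma>) = f (ccons i \<sigma> 0) (address f (\<lambda>j. ccons i \<sigma> (Suc j)))"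
    by (rule addr_Suc0[OF ccons_codes[OF assms]])
  moreover have "(\<lambda>j. ccons i \<sigma> (Suc j)) = \<sigma>" by (simp add: ccons_def)
  ultimately show ?thesis by (simp add: ccons_def)
qed

definition x0 :: 'a where "x0 = undefined"
definition Bd :: real where "Bd = 2 * (M x0 / (1 - q))"

lemma Bd_nn: "0 \<le> Bd" using M_nn q1 by (simp add: Bd_def)

lemma addr_near: "\<sigma> \<in> code_space N \<Longrightarrow> dist (address f \<sigma>) x0 \<le> M x0 / (1 - q)"
proof -
  assume \<sigma>: "\<sigma> \<in> code_space N"
  have "(\<lambda>k. dist (fcomp f \<sigma> k x0) x0) \<longlonglongrightarrow> dist (address f \<sigma>) x0"
    by (intro tendsto_dist addr_conv[OF \<sigma>] tendsto_const)
  then show ?thesis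
    by (rule LIMSEQ_le_const2) (use \<sigma> fcomp_bound in \<open>auto simp: code_space_def\<close>)
qed

lemma addr_dist: "\<sigma> \<in> code_space N \<Longrightarrow> \<tau> \<in> code_space N \<Longrightarrow> dist (address f \<sigma>) (address f \<tau>) \<le> Bd"
proof -
  assume a: "\<sigma> \<in> code_space N" "\<tau> \<in> code_space N"
  have "dist (address f \<sigma>) (address f \<tau>) \<le> dist (address f \<sigma>) x0 + dist (address f \<tau>) x0"
    by (rule dist_triangle2)
  also have "\<dots> \<le> Bd" using addr_near[OF a(1)] addr_near[OF a(2)] by (simp add: Bd_def)
  finally show ?thesis .
qed

lemma addr_agree_prod:
  assumes "\<sigma> \<in> code_space N" "\<tau> \<in> code_space N" "\<forall>i<n. \<sigma> i = \<tau> i"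
  shows "dist (address f \<sigma>) (address f \<tau>) \<le> (\<Prod>i<n. lc (\<sigma> i)) * Bd"
proof -
  have e1: "address f \<sigma> = fcomp f \<sigma> n (address f (\<lambda>j. \<sigma> (j + n)))" by (rule addr_shift[OF assms(1)])
  have e2: "address f \<tau> = fcomp f \<tau> n (address f (\<lambda>j. \<tau> (j + n)))" by (rule addr_shift[OF assms(2)])
  have e3: "fcomp f \<tau> n = fcomp f \<sigma> n" using fcomp_cong[OF assms(3), of f] by (rule sym)
  have "dist (address f \<sigma>) (address f \<tau>) =
      dist (fcomp f \<sigma> n (address f (\<lambda>j. \<sigma> (j + n)))) (fcomp f \<sigma> n (address f (\<lambda>j. \<tau> (j + n))))"
    by (subst e1, subst e2, subst e3) (rule refl)
  also have "\<dots> \<le> (\<Prod>i<n. lc (\<sigma> i)) * dist (address f (\<lambda>j. \<sigma> (j + n))) (address f (\<lambda>j. \<tau> (j + n)))"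
    using assms(1) by (intro fcomp_lip_prod) (auto simp: code_space_def)
  also have "\<dots> \<le> (\<Prod>i<n. lc (\<sigma> i)) * Bd"
    using assms lc by (intro mult_left_mono addr_dist codes_shift prod_nonneg) (auto simp: code_space_def)
  finally show ?thesis .
qed

lemma addr_agree:
  assumes "\<sigma> \<in> code_space N" "\<tau> \<in> code_space N" "\<forall>i<n. \<sigma> i = \<tau> i"
  shows "dist (address f \<sigma>) (address f \<tau>) \<le> q^n * Bd"
  using addr_agree_prod[OF assms] prod_lc_le[of n \<sigma>] assms(1) Bd_nn
  by (smt (verit, best) codesD mult_right_mono)

end


fun greedy :: "(nat list \<Rightarrow> nat \<Rightarrow> nat) \<Rightarrow> nat \<Rightarrow> nat list" where
  "greedy ch 0 = []"
| "greedy ch (Suc k) = greedy ch k @ [ch (greedy ch k) k]"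

lemma greedy_len[simp]: "length (greedy ch k) = k" by (induction k) auto

lemma greedy_prefix: "k \<le> m \<Longrightarrow> \<exists>ys. greedy ch m = greedy ch k @ ys"
proof (induction m)
  case 0 then show ?case by simp
next
  case (Suc m)
  show ?case
  proof (cases "k = Suc m")
    case True then show ?thesis by simp
  next
    case False
    then have "k \<le> m" using Suc.prems by simp
    then obtain ys where "greedy ch m = greedy ch k @ ys" using Suc.IH by blast
    then show ?thesis by simp
  qed
qed

lemma greedy_nth: "i < k \<Longrightarrow> greedy ch k ! i = greedy ch (Suc i) ! i"
proof -
  assume ik: "i < k"
  obtain ys where "greedy ch k = greedy ch (Suc i) @ ys" using greedy_prefix[of "Suc i" k ch] ik by auto
  then show ?thesis by (simp add: nth_append)
qed

lemma lex_antisym: "lex_le a b \<Longrightarrow> lex_le b a \<Longrightarrow> a = b"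
proof (rule ccontr)
  assume ab: "lex_le a b" "lex_le b a" "a \<noteq> b"
  then obtain k1 where k1: "\<forall>j<k1. a j = b j" "a k1 < b k1" by (auto simp: lex_le_def lex_less_def)
  obtain k2 where k2: "\<forall>j<k2. b j = a j" "b k2 < a k2" using ab by (auto simp: lex_le_def lex_less_def)
  show False
  proof (cases k1 k2 rule: linorder_cases)
    case less then show ?thesis using k1 k2 by force
  next
    case equal then show ?thesis using k1 k2 by simp
  next
    case greater then show ?thesis using k1 k2 by force
  qed
qed

context ifs begin

definition P where "P = address f ` code_space N"

lemma P_ne: "P \<noteq> {}" using codes_ne by (auto simp: P_def)

lemma P_inv: "P = (\<Union>i\<in>{1..N}. f i ` P)"
proof
  show "P \<subseteq> (\<Union>i\<in>{1..N}. f i ` P)"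
  proof
    fix x assume "x \<in> P"
    then obtain \<sigma> where \<sigma>: "\<sigma> \<in> code_space N" "x = address f \<sigma>" by (auto simp: P_def)
    have "x = f (\<sigma> 0) (address f (\<lambda>j. \<sigma> (Suc j)))" using addr_Suc0[OF \<sigma>(1)] \<sigma>(2) by simp
    moreover have "(\<lambda>j. \<sigma> (Suc j)) \<in> code_space N" using \<sigma>(1) by (simp add: code_space_def)
    moreover have "\<sigma> 0 \<in> {1..N}" using \<sigma>(1) by (rule codesD)
    ultimately show "x \<in> (\<Union>i\<in>{1..N}. f i ` P)" unfolding P_def by blast
  qed
  show "(\<Union>i\<in>{1..N}. f i ` P) \<subseteq> P"
  proof
    fix x assume "x \<in> (\<Union>i\<in>{1..N}. f i ` P)"
    then obtain i \<sigma> where i\<sigma>: "i \<in> {1..N}" "\<sigma> \<in> code_space N" "x = f i (address f \<sigma>)"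
      unfolding P_def by blast
    then have "x = address f (ccons i \<sigma>)" using addr_cons by simp
    then show "x \<in> P" using ccons_codes[OF i\<sigma>(1,2)] unfolding P_def by blast
  qed
qed

lemma codes_compact': "compact (code_space N)"
proof -
  have "code_space N = {u. \<forall>i. u i \<in> {1..N}}" by (simp add: code_space_def)
  then show ?thesis using codes_compact[of "{1..N}"] by simp
qed

lemma addr_cont: "continuous_on (code_space N) (address f)"
  unfolding continuous_on_topological
proof (intro ballI allI impI)
  fix \<sigma> B assume \<sigma>: "\<sigma> \<in> code_space N" and B: "open B" "address f \<sigma> \<in> B"
  obtain e where e: "0 < e" "ball (address f \<sigma>) e \<subseteq> B" using B openE by blast
  obtain n where n: "q^n < e / (Bd + 1)" using real_arch_pow_inv[OF _ q1, of "e/(Bd+1)"] e Bd_nn by auto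
  have qnB: "q^n * Bd < e"
  proof -
    have "q^n * Bd \<le> q^n * (Bd + 1)" using q0 by (simp add: mult_left_mono)
    also have "\<dots> < e" using n Bd_nn by (simp add: pos_less_divide_eq)
    finally show ?thesis .
  qed
  define U where "U = {u::nat\<Rightarrow>nat. \<forall>i<length (map \<sigma> [0..<n]). u i = map \<sigma> [0..<n] ! i}"
  have "open U" unfolding U_def by (rule cyl_open)
  moreover have "\<sigma> \<in> U" by (simp add: U_def)
  moreover have "\<forall>\<tau>\<in>code_space N. \<tau> \<in> U \<longrightarrow> address f \<tau> \<in> B"
  proof (intro ballI impI)
    fix \<tau> assume \<tau>: "\<tau> \<in> code_space N" "\<tau> \<in> U"
    then have "\<forall>i<n. \<sigma> i = \<tau> i" by (simp add: U_def)
    then have "dist (address f \<sigma>) (address f \<tau>) \<le> q^n * Bd" using addr_agree \<sigma> \<tau>(1) by blast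
    then have "address f \<tau> \<in> ball (address f \<sigma>) e" using qnB by simp
    then show "address f \<tau> \<in> B" using e by blast
  qed
  ultimately show "\<exists>A. open A \<and> \<sigma> \<in> A \<and> (\<forall>y\<in>code_space N. y \<in> A \<longrightarrow> address f y \<in> B)" by blast
qed

lemma P_compact: "compact P"
  unfolding P_def by (rule compact_continuous_image[OF addr_cont codes_compact'])

lemma fcomp_maps:
  assumes "(\<Union>i\<in>{1..N}. f i ` A) \<subseteq> A" "\<sigma> \<in> code_space N" "y \<in> A"
  shows "fcomp f \<sigma> k y \<in> A"
  using assms(3)
proof (induction k arbitrary: y)
  case 0 then show ?case by simp
next
  case (Suc k)
  have "f (\<sigma> k) y \<in> A" using assms(1) codesD[OF assms(2)] Suc.prems by blast
  then show ?case using Suc.IH by simp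
qed

lemma P_unique:
  assumes A: "A \<noteq> {}" "compact A" "A = (\<Union>i\<in>{1..N}. f i ` A)"
  shows "A = P"
proof
  obtain a0 where a0: "a0 \<in> A" using A(1) by blast
  have cl: "closed A" using A(2) by (rule compact_imp_closed)
  have sub: "(\<Union>i\<in>{1..N}. f i ` A) \<subseteq> A" using A(3) by blast
  show "P \<subseteq> A"
  proof
    fix x assume "x \<in> P"
    then obtain \<sigma> where \<sigma>: "\<sigma> \<in> code_space N" "x = address f \<sigma>" by (auto simp: P_def)
    have "fcomp f \<sigma> k a0 \<in> A" for k by (rule fcomp_maps[OF sub \<sigma>(1) a0])
    then show "x \<in> A" using closed_sequentially[OF cl _ addr_conv[OF \<sigma>(1)]] \<sigma>(2) by blast
  qed
  show "A \<subseteq> P"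
  proof
    fix a assume a: "a \<in> A"
    have "\<forall>y\<in>A. \<exists>p. fst p \<in> {1..N} \<and> snd p \<in> A \<and> y = f (fst p) (snd p)"
    proof
      fix y assume "y \<in> A"
      then have "y \<in> (\<Union>i\<in>{1..N}. f i ` A)" using A(3) by blast
      then obtain i y' where "i \<in> {1..N}" "y' \<in> A" "y = f i y'" by blast
      then show "\<exists>p. fst p \<in> {1..N} \<and> snd p \<in> A \<and> y = f (fst p) (snd p)" by (intro exI[of _ "(i,y')"]) simp
    qed
    then obtain ch where ch: "\<And>y. y \<in> A \<Longrightarrow> fst (ch y) \<in> {1..N} \<and> snd (ch y) \<in> A \<and> y = f (fst (ch y)) (snd (ch y))"
      by metis
    define ys where "ys k = ((\<lambda>y. snd (ch y)) ^^ k) a" for k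
    define \<sigma> where "\<sigma> k = fst (ch (ys k))" for k
    have ysA: "ys k \<in> A" for k
    proof (induction k)
      case 0 then show ?case using a by (simp add: ys_def)
    next
      case (Suc k) then show ?case using ch by (simp add: ys_def)
    qed
    have \<sigma>c: "\<sigma> \<in> code_space N" using ysA ch by (simp add: \<sigma>_def code_space_def)
    have inv: "fcomp f \<sigma> k (ys k) = a" for k
    proof (induction k)
      case 0 then show ?case by (simp add: ys_def)
    next
      case (Suc k)
      have "ys (Suc k) = snd (ch (ys k))" by (simp add: ys_def)
      then have "f (\<sigma> k) (ys (Suc k)) = ys k" using ch[OF ysA[of k]] by (simp add: \<sigma>_def)
      then show ?case using Suc by simp
    qed
    obtain D where D: "\<forall>y\<in>A. dist a0 y \<le> D"
      using compact_imp_bounded[OF A(2)] bounded_any_center by blast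
    have "(\<lambda>k. dist (fcomp f \<sigma> k a0) a) \<longlonglongrightarrow> 0"
    proof (rule sandwich0[OF zero_le_dist])
      show "dist (fcomp f \<sigma> k a0) a \<le> q^k * D" for k
      proof -
        have "dist (fcomp f \<sigma> k a0) a = dist (fcomp f \<sigma> k a0) (fcomp f \<sigma> k (ys k))" using inv by simp
        also have "\<dots> \<le> q^k * dist a0 (ys k)" using \<sigma>c by (intro fcomp_lip) (auto simp: code_space_def)
        also have "\<dots> \<le> q^k * D" using D ysA q0 by (intro mult_left_mono) auto
        finally show ?thesis .
      qed
      show "(\<lambda>k. q^k * D) \<longlonglongrightarrow> 0"
        by (rule tendsto_mult_left_zero) (rule LIMSEQ_power_zero, use q0 q1 in simp)
    qed
    then have "(\<lambda>k. fcomp f \<sigma> k a0) \<longlonglongrightarrow> a" by (rule tendsto_dist_iff[THEN iffD2])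
    then have "a = address f \<sigma>" using addr_conv[OF \<sigma>c] LIMSEQ_unique by blast
    then show "a \<in> P" using \<sigma>c by (simp add: P_def)
  qed
qed

lemma attractor_eq: "attractor N f = P"
  unfolding attractor_def
proof (rule the_equality)
  show "P \<noteq> {} \<and> compact P \<and> P = (\<Union>i\<in>{1..N}. f i ` P)" using P_ne P_compact P_inv by blast
  fix A assume "A \<noteq> {} \<and> compact A \<and> A = (\<Union>i\<in>{1..N}. f i ` A)"
  then show "A = P" using P_unique by blast
qed

lemma tops_props:
  assumes x: "x \<in> P"
  shows "tops N f x \<in> code_space N \<and> address f (tops N f x) = x"
proof -
  define S where "S = {\<sigma> \<in> code_space N. address f \<sigma> = x}"
  have Sne: "S \<noteq> {}" using x by (auto simp: S_def P_def)
  define D where "D pr k = {d \<in> {1..N}. \<exists>\<sigma>\<in>S. (\<forall>i<k. \<sigma> i = pr ! i) \<and> \<sigma> k = d}" for pr k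
  define ch where "ch pr k = Max (D pr k)" for pr k
  define \<gamma> where "\<gamma> k = greedy ch (Suc k) ! k" for k
  have finD: "finite (D pr k)" for pr k by (simp add: D_def)
  have inv: "\<exists>\<sigma>\<in>S. \<forall>i<k. \<sigma> i = greedy ch k ! i" for k
  proof (induction k)
    case 0 then show ?case using Sne by auto
  next
    case (Suc k)
    then obtain \<sigma> where \<sigma>: "\<sigma> \<in> S" "\<forall>i<k. \<sigma> i = greedy ch k ! i" by blast
    have "\<sigma> k \<in> D (greedy ch k) k" using \<sigma> by (auto simp: D_def S_def code_space_def)
    then have "ch (greedy ch k) k \<in> D (greedy ch k) k" unfolding ch_def using finD by (intro Max_in) auto
    then obtain \<sigma>' where \<sigma>': "\<sigma>' \<in> S" "\<forall>i<k. \<sigma>' i = greedy ch k ! i" "\<sigma>' k = ch (greedy ch k) k"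
      by (auto simp: D_def)
    have "\<forall>i<Suc k. \<sigma>' i = greedy ch (Suc k) ! i"
      using \<sigma>' by (auto simp: nth_append less_Suc_eq)
    then show ?case using \<sigma>'(1) by blast
  qed
  have gk: "greedy ch k ! i = \<gamma> i" if "i < k" for i k using greedy_nth[OF that] by (simp add: \<gamma>_def)
  have agree: "\<exists>\<sigma>\<in>S. \<forall>i<k. \<sigma> i = \<gamma> i" for k using inv[of k] gk by auto
  have Dne: "D (greedy ch k) k \<noteq> {}" for k
  proof -
    obtain \<sigma> where "\<sigma> \<in> S" "\<forall>i<k. \<sigma> i = greedy ch k ! i" using inv by blast
    then have "\<sigma> k \<in> D (greedy ch k) k" by (auto simp: D_def S_def code_space_def)
    then show ?thesis by blast
  qed
  have \<gamma>ch: "\<gamma> k = ch (greedy ch k) k" for k by (simp add: \<gamma>_def nth_append)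
  have \<gamma>max: "\<gamma> k = Max (D (greedy ch k) k)" for k
  proof -
    have "ch (greedy ch k) k = Max (D (greedy ch k) k)" by (rule ch_def)
    then show ?thesis using \<gamma>ch by simp
  qed
  have \<gamma>D: "\<gamma> k \<in> D (greedy ch k) k" for k unfolding \<gamma>max by (rule Max_in[OF finD Dne])
  have \<gamma>c: "\<gamma> \<in> code_space N" using \<gamma>D by (auto simp: D_def code_space_def)
  have \<gamma>x: "address f \<gamma> = x"
  proof -
    have le: "dist x (address f \<gamma>) \<le> q^k * Bd" for k
    proof -
      obtain \<sigma> where \<sigma>: "\<sigma> \<in> S" "\<forall>i<k. \<sigma> i = \<gamma> i" using agree by blast
      then have "dist (address f \<sigma>) (address f \<gamma>) \<le> q^k * Bd" using \<gamma>c by (intro addr_agree) (auto simp: S_def)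
      then show ?thesis using \<sigma> by (simp add: S_def)
    qed
    have "(\<lambda>k. q^k * Bd) \<longlonglongrightarrow> 0"
      by (rule tendsto_mult_left_zero) (rule LIMSEQ_power_zero, use q0 q1 in simp)
    then have "dist x (address f \<gamma>) \<le> 0" by (rule LIMSEQ_le_const) (use le in blast)
    then show ?thesis by simp
  qed
  have \<gamma>S: "\<gamma> \<in> S" using \<gamma>c \<gamma>x by (simp add: S_def)
  have maxi: "lex_le \<tau> \<gamma>" if "\<tau> \<in> S" for \<tau>
  proof (cases "\<tau> = \<gamma>")
    case True then show ?thesis by (simp add: lex_le_def)
  next
    case False
    then have ex: "\<exists>k. \<tau> k \<noteq> \<gamma> k" by (meson ext)
    define k where "k = (LEAST k. \<tau> k \<noteq> \<gamma> k)"
    have k1: "\<tau> k \<noteq> \<gamma> k" unfolding k_def using ex by (rule LeastI_ex)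
    have k2: "\<forall>i<k. \<tau> i = \<gamma> i" unfolding k_def using not_less_Least by blast
    have "\<tau> k \<in> D (greedy ch k) k" using that k2 gk by (auto simp: D_def S_def code_space_def)
    then have "\<tau> k \<le> \<gamma> k" unfolding \<gamma>max by (rule Max_ge[OF finD])
    then have "\<tau> k < \<gamma> k" using k1 by simp
    then show ?thesis using k2 by (auto simp: lex_le_def lex_less_def)
  qed
  have "tops N f x = \<gamma>"
    unfolding tops_def
  proof (rule the_equality)
    show "\<gamma> \<in> code_space N \<and> address f \<gamma> = x \<and> (\<forall>\<tau>\<in>code_space N. address f \<tau> = x \<longrightarrow> lex_le \<tau> \<gamma>)"
      using \<gamma>c \<gamma>x maxi by (auto simp: S_def)
    fix \<sigma> assume \<sigma>: "\<sigma> \<in> code_space N \<and> address f \<sigma> = x \<and> (\<forall>\<tau>\<in>code_space N. address f \<tau> = x \<longrightarrow> lex_le \<tau> \<sigma>)"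
    then have "lex_le \<gamma> \<sigma>" using \<gamma>c \<gamma>x by blast
    moreover have "lex_le \<sigma> \<gamma>" using \<sigma> maxi by (auto simp: S_def)
    ultimately show "\<sigma> = \<gamma>" by (rule lex_antisym[rotated])
  qed
  then show ?thesis using \<gamma>c \<gamma>x by simp
qed

end


lemma sum_wt_lists:
  assumes "finite A"
  shows "(\<Sum>w\<in>{w. set w \<subseteq> A \<and> length w = n}. wt p w) = (\<Sum>i\<in>A. p i)^n"
proof (induction n)
  case 0
  have "{w. set w \<subseteq> A \<and> length w = 0} = {[]}" by auto
  then show ?case by simp
next
  case (Suc n)
  have "(\<Sum>w\<in>{w. set w \<subseteq> A \<and> length w = Suc n}. wt p w)
      = (\<Sum>w\<in>(\<lambda>(xs, n). n#xs) ` ({xs. set xs \<subseteq> A \<and> length xs = n} \<times> A). wt p w)"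
    by (simp only: lists_length_Suc_eq)
  also have "\<dots> = (\<Sum>z\<in>{xs. set xs \<subseteq> A \<and> length xs = n} \<times> A. wt p ((\<lambda>(xs, n). n#xs) z))"
    using sum.reindex[OF inj_split_Cons, of "wt p" "{xs. set xs \<subseteq> A \<and> length xs = n} \<times> A"] by (simp add: o_def)
  also have "\<dots> = (\<Sum>xs\<in>{xs. set xs \<subseteq> A \<and> length xs = n}. \<Sum>i\<in>A. p i * wt p xs)"
    by (simp add: sum.cartesian_product split_def)
  also have "\<dots> = (\<Sum>xs\<in>{xs. set xs \<subseteq> A \<and> length xs = n}. wt p xs * (\<Sum>i\<in>A. p i))"
    by (simp add: sum_distrib_right mult.commute)
  also have "\<dots> = (\<Sum>i\<in>A. p i)^n * (\<Sum>i\<in>A. p i)" using Suc by (simp add: sum_distrib_right[symmetric])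
  finally show ?case by (simp add: mult.commute)
qed

lemma wt_powr: "(\<forall>i\<in>set w. 0 \<le> p i) \<Longrightarrow> wt p w powr s = wt (\<lambda>i. p i powr s) w"
  unfolding wt_def by (simp add: prod_powr_distrib)

lemma wt_nonneg': "(\<forall>i\<in>set w. 0 \<le> p i) \<Longrightarrow> 0 \<le> wt p w"
  unfolding wt_def by (rule prod_nonneg) auto

locale thm7 =
  fixes N :: nat and f :: "nat \<Rightarrow> 'a::complete_space \<Rightarrow> 'a" and g :: "nat \<Rightarrow> 'b::complete_space \<Rightarrow> 'b"
    and c r :: "nat \<Rightarrow> real"
  assumes N: "N \<ge> 1"
    and c: "\<forall>i\<in>{1..N}. 0 < c i \<and> c i < 1"
    and r: "\<forall>i\<in>{1..N}. 0 < r i \<and> r i < 1"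
    and fsim: "\<forall>i\<in>{1..N}. \<forall>x x'. dist (f i x) (f i x') = c i * dist x x'"
    and glip: "\<forall>i\<in>{1..N}. \<forall>y y'. dist (g i y) (g i y') \<le> r i * dist y y'"
    and cr: "\<forall>i\<in>{1..N}. c i \<le> r i"
begin

definition qf where "qf = Max (c ` {1..N})"
definition qg where "qg = Max (r ` {1..N})"

lemma qf: "qf < 1" "i \<in> {1..N} \<Longrightarrow> c i \<le> qf"
  using N c by (auto simp: qf_def)
lemma qg: "qg < 1" "i \<in> {1..N} \<Longrightarrow> r i \<le> qg"
  using N r by (auto simp: qg_def)

lemma cpos: "i \<in> {1..N} \<Longrightarrow> 0 < c i" and clt: "i \<in> {1..N} \<Longrightarrow> c i < 1"
  and rpos: "i \<in> {1..N} \<Longrightarrow> 0 < r i" and rlt: "i \<in> {1..N} \<Longrightarrow> r i < 1"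
  using c r by auto

sublocale F: ifs N f c qf
proof unfold_locales
  show "1 \<le> N" by (rule N)
  show "qf < 1" by (rule qf(1))
  show "0 \<le> c i \<and> c i \<le> qf" if "i \<in> {1..N}" for i using cpos[OF that] qf(2)[OF that] by simp
  show "dist (f i x) (f i y) \<le> c i * dist x y" if "i \<in> {1..N}" for i x y using fsim that by simp
qed

sublocale G: ifs N g r qg
proof unfold_locales
  show "1 \<le> N" by (rule N)
  show "qg < 1" by (rule qg(1))
  show "0 \<le> r i \<and> r i \<le> qg" if "i \<in> {1..N}" for i using rpos[OF that] qg(2)[OF that] by simp
  show "dist (g i x) (g i y) \<le> r i * dist x y" if "i \<in> {1..N}" for i x y using glip that by simp
qed

definition W where "W n = {w. set w \<subseteq> {1..N} \<and> length w = n}" for n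
definition Cyl where "Cyl n w = {(address f \<sigma>, address g \<sigma>) | \<sigma>. \<sigma> \<in> code_space N \<and> (\<forall>i<n. \<sigma> i = w!i)}" for n w
definition B where "B = F.Bd + G.Bd"

lemma B_nn: "0 \<le> B" using F.Bd_nn G.Bd_nn by (simp add: B_def)

lemma finW: "finite (W n)" unfolding W_def by (rule finite_lists_length_eq) simp

lemma graph_cover: "fractal_graph N f g \<subseteq> (\<Union>w\<in>W n. Cyl n w)"
proof
  fix p assume "p \<in> fractal_graph N f g"
  then obtain x where x: "x \<in> attractor N f" "p = (x, fractal_transformation N f g x)"
    by (auto simp: fractal_graph_def)
  have "x \<in> F.P" using x F.attractor_eq by simp
  then have t: "tops N f x \<in> code_space N" "address f (tops N f x) = x" using F.tops_props by auto
  define \<sigma> where "\<sigma> = tops N f x"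
  have "p = (address f \<sigma>, address g \<sigma>)" using x t by (simp add: \<sigma>_def fractal_transformation_def)
  moreover have "map \<sigma> [0..<n] \<in> W n" using t by (auto simp: W_def \<sigma>_def code_space_def)
  ultimately show "p \<in> (\<Union>w\<in>W n. Cyl n w)" using t unfolding Cyl_def \<sigma>_def by force
qed

lemma wt_r_nn: "w \<in> W n \<Longrightarrow> 0 \<le> wt r w" using r by (intro wt_nonneg') (auto simp: W_def less_imp_le)

lemma wt_r_le: "w \<in> W n \<Longrightarrow> wt r w \<le> qg^n"
proof -
  assume w: "w \<in> W n"
  have lw: "length w = n" "set w \<subseteq> {1..N}" using w by (auto simp: W_def)
  have wi: "w!i \<in> {1..N}" if "i < n" for i using lw nth_mem that by blast
  have "wt r w \<le> (\<Prod>i<n. qg)" unfolding wt_def lw(1)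
  proof (intro prod_mono)
    fix i assume "i \<in> {..<n}"
    then have "w!i \<in> {1..N}" using wi by simp
    then show "0 \<le> r (w!i) \<and> r (w!i) \<le> qg" using rpos qg(2) by (simp add: less_imp_le)
  qed
  then show ?thesis by simp
qed

lemma cyl_dist:
  assumes w: "w \<in> W n" and p: "p \<in> Cyl n w" "p' \<in> Cyl n w"
  shows "max_dist p p' \<le> wt r w * B"
proof -
  obtain \<sigma> where \<sigma>: "\<sigma> \<in> code_space N" "\<forall>i<n. \<sigma> i = w!i" "p = (address f \<sigma>, address g \<sigma>)"
    using p(1) by (auto simp: Cyl_def)
  obtain \<tau> where \<tau>: "\<tau> \<in> code_space N" "\<forall>i<n. \<tau> i = w!i" "p' = (address f \<tau>, address g \<tau>)"
    using p(2) by (auto simp: Cyl_def)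
  have ag: "\<forall>i<n. \<sigma> i = \<tau> i" using \<sigma> \<tau> by simp
  have wr: "(\<Prod>i<n. r (\<sigma> i)) = wt r w" using w \<sigma>(2) by (simp add: wt_def W_def)
  have cr': "(\<Prod>i<n. c (\<sigma> i)) \<le> (\<Prod>i<n. r (\<sigma> i))"
    using \<sigma>(1) c cr by (intro prod_mono) (auto simp: code_space_def less_imp_le)
  have d1: "dist (address f \<sigma>) (address f \<tau>) \<le> wt r w * F.Bd"
    using F.addr_agree_prod[OF \<sigma>(1) \<tau>(1) ag] mult_right_mono[OF cr' F.Bd_nn] unfolding wr by linarith
  have d2: "dist (address g \<sigma>) (address g \<tau>) \<le> wt r w * G.Bd"
    using G.addr_agree_prod[OF \<sigma>(1) \<tau>(1) ag] wr by simp
  have "wt r w * F.Bd \<le> wt r w * B" "wt r w * G.Bd \<le> wt r w * B"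
    using wt_r_nn[OF w] F.Bd_nn G.Bd_nn by (auto simp: B_def intro!: mult_left_mono)
  then show ?thesis using d1 d2 \<sigma>(3) \<tau>(3) by (simp add: max_dist_def)
qed

lemma diam_pow_cyl:
  assumes w: "w \<in> W n" and s: "0 < s"
  shows "diam_pow max_dist s (Cyl n w) \<le> ennreal (wt (\<lambda>i. r i powr s) w * B powr s)"
proof (cases "Cyl n w = {}")
  case True then show ?thesis by (simp add: diam_pow_def)
next
  case False
  then obtain p where p: "p \<in> Cyl n w" by blast
  have bd: "\<And>x y. x \<in> Cyl n w \<Longrightarrow> y \<in> Cyl n w \<Longrightarrow> max_dist x y \<le> wt r w * B"
    using cyl_dist[OF w] by blast
  have d0: "0 \<le> ddiam max_dist (Cyl n w)"
  proof -
    have "max_dist p p \<le> ddiam max_dist (Cyl n w)" by (rule ddiam_ge[OF p p bd])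
    then show ?thesis by (simp add: max_dist_def)
  qed
  have ne: "{max_dist x y |x y. x \<in> Cyl n w \<and> y \<in> Cyl n w} \<noteq> {}" using p by blast
  have "Sup {max_dist x y |x y. x \<in> Cyl n w \<and> y \<in> Cyl n w} \<le> wt r w * B"
    by (rule cSup_least[OF ne]) (use bd in blast)
  then have dle: "ddiam max_dist (Cyl n w) \<le> wt r w * B" using False by (simp add: ddiam_def)
  have "ddiam max_dist (Cyl n w) powr s \<le> (wt r w * B) powr s"
    using d0 dle s by (intro powr_mono2) auto
  also have "\<dots> = wt r w powr s * B powr s"
    using wt_r_nn[OF w] B_nn by (simp add: powr_mult)
  also have "wt r w powr s = wt (\<lambda>i. r i powr s) w"
    using w r by (intro wt_powr) (auto simp: W_def less_imp_le)
  finally show ?thesis using False s by (simp add: diam_pow_def ennreal_leI)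
qed

lemma sum_wt_r: "(\<Sum>w\<in>W n. wt (\<lambda>i. r i powr s) w) = (\<Sum>i=1..N. r i powr s)^n"
  unfolding W_def by (rule sum_wt_lists) simp

lemma upper_est:
  assumes s: "0 < s" and \<delta>: "qg^n * B \<le> \<delta>"
  shows "(INF U\<in>{U. delta_cover max_dist \<delta> (fractal_graph N f g) U}. (\<Sum>k. diam_pow max_dist s (U k)))
      \<le> ennreal (B powr s * (\<Sum>i=1..N. r i powr s)^n)"
proof -
  obtain h where h: "bij_betw h {0..<card (W n)} (W n)" using ex_bij_betw_nat_finite[OF finW] by blast
  define U where "U k = (if k < card (W n) then Cyl n (h k) else {})" for k
  have hW: "h k \<in> W n" if "k < card (W n)" for k using h that by (auto simp: bij_betw_def)
  have dc: "delta_cover max_dist \<delta> (fractal_graph N f g) U"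
    unfolding delta_cover_def
  proof
    show "fractal_graph N f g \<subseteq> (\<Union>k. U k)"
    proof
      fix p assume "p \<in> fractal_graph N f g"
      then obtain w where w: "w \<in> W n" "p \<in> Cyl n w" using graph_cover by blast
      then obtain k where "k \<in> {0..<card (W n)}" "h k = w" using h by (metis bij_betw_iff_bijections)
      then show "p \<in> (\<Union>k. U k)" using w by (auto simp: U_def)
    qed
    show "\<forall>k. \<forall>x\<in>U k. \<forall>y\<in>U k. max_dist x y \<le> \<delta>"
    proof (intro allI ballI)
      fix k x y assume xy: "x \<in> U k" "y \<in> U k"
      then have k: "k < card (W n)" by (auto simp: U_def split: if_splits)
      then have "x \<in> Cyl n (h k)" "y \<in> Cyl n (h k)" using xy by (auto simp: U_def)
      then have "max_dist x y \<le> wt r (h k) * B" using cyl_dist hW[OF k] by blast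
      also have "\<dots> \<le> qg^n * B" using wt_r_le[OF hW[OF k]] B_nn by (rule mult_right_mono)
      finally show "max_dist x y \<le> \<delta>" using \<delta> by simp
    qed
  qed
  have "(\<Sum>k. diam_pow max_dist s (U k)) = (\<Sum>k\<in>{0..<card (W n)}. diam_pow max_dist s (U k))"
    by (rule suminf_finite) (auto simp: U_def diam_pow_def)
  also have "\<dots> \<le> (\<Sum>k\<in>{0..<card (W n)}. ennreal (wt (\<lambda>i. r i powr s) (h k) * B powr s))"
    using hW diam_pow_cyl s by (intro sum_mono) (auto simp: U_def)
  also have "\<dots> = ennreal (\<Sum>k\<in>{0..<card (W n)}. wt (\<lambda>i. r i powr s) (h k) * B powr s)"
    by (rule sum_ennreal) (auto intro!: mult_nonneg_nonneg wt_nonneg')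
  also have "(\<Sum>k\<in>{0..<card (W n)}. wt (\<lambda>i. r i powr s) (h k) * B powr s) = (\<Sum>w\<in>W n. wt (\<lambda>i. r i powr s) w * B powr s)"
    by (rule sum.reindex_bij_betw[OF h])
  also have "\<dots> = B powr s * (\<Sum>i=1..N. r i powr s)^n"
    by (simp add: sum_distrib_right[symmetric] sum_wt_r mult.commute)
  finally have "(\<Sum>k. diam_pow max_dist s (U k)) \<le> ennreal (B powr s * (\<Sum>i=1..N. r i powr s)^n)" .
  then show ?thesis using dc by (intro INF_lower2[of U]) auto
qed

lemma upper_zero:
  assumes s: "0 < s" and lt: "(\<Sum>i=1..N. r i powr s) < 1"
  shows "hausdorff_measure max_dist s (fractal_graph N f g) = 0"
proof -
  define \<rho> where "\<rho> = (\<Sum>i=1..N. r i powr s)"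
  have \<rho>0: "0 \<le> \<rho>" unfolding \<rho>_def by (intro sum_nonneg) auto
  have q0: "0 \<le> qg" using G.q0 .
  have zero: "(INF U\<in>{U. delta_cover max_dist \<delta> (fractal_graph N f g) U}. (\<Sum>k. diam_pow max_dist s (U k))) = 0"
    if \<delta>: "0 < \<delta>" for \<delta>
  proof -
    have "(INF U\<in>{U. delta_cover max_dist \<delta> (fractal_graph N f g) U}. (\<Sum>k. diam_pow max_dist s (U k))) \<le> 0"
    proof (rule ennreal_le_epsilon)
      fix e :: real assume e: "0 < e"
      have t1: "(\<lambda>n. qg^n * B) \<longlonglongrightarrow> 0"
        by (rule tendsto_mult_left_zero) (rule LIMSEQ_power_zero, use q0 qg in simp)
      have t2: "(\<lambda>n. B powr s * \<rho>^n) \<longlonglongrightarrow> 0"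
        by (rule tendsto_mult_right_zero) (rule LIMSEQ_power_zero, use \<rho>0 lt in \<open>simp add: \<rho>_def\<close>)
      have "eventually (\<lambda>n. qg^n * B < \<delta>) sequentially" using order_tendstoD(2)[OF t1 \<delta>] .
      moreover have "eventually (\<lambda>n. B powr s * \<rho>^n < e) sequentially" using order_tendstoD(2)[OF t2 e] .
      ultimately have "eventually (\<lambda>n. qg^n * B < \<delta> \<and> B powr s * \<rho>^n < e) sequentially"
        by (rule eventually_conj)
      then obtain n0 where "\<forall>n\<ge>n0. qg^n * B < \<delta> \<and> B powr s * \<rho>^n < e"
        unfolding eventually_sequentially by blast
      then have n: "qg^n0 * B < \<delta>" "B powr s * \<rho>^n0 < e" by auto
      have "(INF U\<in>{U. delta_cover max_dist \<delta> (fractal_graph N f g) U}. (\<Sum>k. diam_pow max_dist s (U k)))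
          \<le> ennreal (B powr s * \<rho>^n0)" unfolding \<rho>_def using n s by (intro upper_est) auto
      also have "\<dots> \<le> ennreal e" using n by (intro ennreal_leI) simp
      finally show "(INF U\<in>{U. delta_cover max_dist \<delta> (fractal_graph N f g) U}. (\<Sum>k. diam_pow max_dist s (U k))) \<le> 0 + ennreal e"
        by simp
    qed
    then show ?thesis by simp
  qed
  show ?thesis unfolding hausdorff_measure_def using zero by simp
qed

end


definition fl :: "(nat \<Rightarrow> 'a \<Rightarrow> 'a) \<Rightarrow> nat list \<Rightarrow> 'a \<Rightarrow> 'a" where
  "fl f w = fcomp f (\<lambda>i. w!i) (length w)"

lemma fl_Nil[simp]: "fl f [] = id" by (simp add: fl_def)

lemma fl_Cons: "fl f (x#xs) = f x \<circ> fl f xs"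
proof -
  have "fl f (x#xs) = fcomp f (\<lambda>i. (x#xs)!i) (Suc (length xs))" by (simp add: fl_def)
  also have "\<dots> = f x \<circ> fcomp f (\<lambda>j. xs!j) (length xs)" by (simp only: fcomp_Suc0) simp
  finally show ?thesis by (simp add: fl_def)
qed

lemma fl_append: "fl f (w @ v) = fl f w \<circ> fl f v"
  by (induction w) (auto simp: fl_Cons)

lemma fcomp_eq_fl: "(\<forall>i<length w. \<sigma> i = w!i) \<Longrightarrow> fcomp f \<sigma> (length w) = fl f w"
  unfolding fl_def by (rule fcomp_cong) simp

lemma wt_append: "wt p (xs @ ys) = wt p xs * wt p ys"
  by (induction xs) auto

lemma wt_pos: "(\<forall>i\<in>set w. 0 < p i) \<Longrightarrow> 0 < wt p w"
  by (induction w) auto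

lemma wt_le1: "(\<forall>i\<in>set w. 0 \<le> p i \<and> p i \<le> 1) \<Longrightarrow> wt p w \<le> 1"
proof (induction w)
  case Nil then show ?case by simp
next
  case (Cons a w)
  have "0 \<le> wt p w" using Cons.prems by (intro wt_nonneg') auto
  then have "p a * wt p w \<le> 1 * 1" using Cons by (intro mult_mono) auto
  then show ?case by simp
qed

lemma wt_lt1: "w \<noteq> [] \<Longrightarrow> (\<forall>i\<in>set w. 0 < p i \<and> p i < 1) \<Longrightarrow> wt p w < 1"
proof (induction w)
  case Nil then show ?case by simp
next
  case (Cons a w)
  have "wt p w \<le> 1" using Cons.prems by (intro wt_le1) (auto simp: less_imp_le)
  moreover have "0 < p a" "p a < 1" using Cons.prems by auto
  ultimately have "p a * wt p w \<le> p a * 1" by (intro mult_left_mono) auto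
  then show ?case using \<open>p a < 1\<close> by simp
qed

lemma compact_sep:
  fixes S T :: "'x::metric_space set"
  assumes "compact S" "compact T" "S \<inter> T = {}"
  shows "\<exists>d>0. \<forall>x\<in>S. \<forall>y\<in>T. d \<le> dist x y"
proof (cases "S = {} \<or> T = {}")
  case True then show ?thesis by (intro exI[of _ 1]) auto
next
  case False
  have clT: "closed T" using assms(2) by (rule compact_imp_closed)
  have "continuous_on S (\<lambda>x. infdist x T)" by (rule continuous_on_infdist[OF continuous_on_id])
  then obtain x0 where x0: "x0 \<in> S" "\<forall>x\<in>S. infdist x0 T \<le> infdist x T"
    using continuous_attains_inf[OF assms(1)] False by blast
  have "x0 \<notin> T" using x0 assms(3) by blast
  then have "infdist x0 T \<noteq> 0" using in_closed_iff_infdist_zero[OF clT] False by blast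
  then have pos: "0 < infdist x0 T" using infdist_nonneg[of x0 T] by linarith
  show ?thesis
  proof (intro exI[of _ "infdist x0 T"] conjI ballI pos)
    fix x y assume "x \<in> S" "y \<in> T"
    then show "infdist x0 T \<le> dist x y" using x0(2) infdist_le[of y T x] by force
  qed
qed

context ifs begin

lemma addr_prefix:
  assumes "\<sigma> \<in> code_space N" "\<forall>i<length w. \<sigma> i = w!i"
  shows "address f \<sigma> = fl f w (address f (\<lambda>j. \<sigma> (j + length w)))"
proof -
  have "address f \<sigma> = fcomp f \<sigma> (length w) (address f (\<lambda>j. \<sigma> (j + length w)))" by (rule addr_shift[OF assms(1)])
  also have "fcomp f \<sigma> (length w) = fl f w" by (rule fcomp_eq_fl[OF assms(2)])
  finally show ?thesis .
qed

end

context thm7 begin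

lemma fl_scale: "set w \<subseteq> {1..N} \<Longrightarrow> dist (fl f w x) (fl f w y) = wt c w * dist x y"
proof (induction w arbitrary: x y)
  case Nil then show ?case by simp
next
  case (Cons a w)
  have a: "a \<in> {1..N}" using Cons.prems by auto
  have "dist (fl f (a#w) x) (fl f (a#w) y) = c a * dist (fl f w x) (fl f w y)"
    using fsim a by (simp add: fl_Cons)
  also have "\<dots> = c a * (wt c w * dist x y)" using Cons by simp
  finally show ?case by simp
qed

lemma wt_c_pos: "set w \<subseteq> {1..N} \<Longrightarrow> 0 < wt c w"
  by (rule wt_pos) (use cpos in blast)

lemma fl_inj: "set w \<subseteq> {1..N} \<Longrightarrow> fl f w x = fl f w y \<Longrightarrow> x = y"
  using fl_scale[of w x y] wt_c_pos[of w] by simp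

lemma fl_U:
  assumes V: "\<forall>i\<in>{1..N}. f i ` V \<subseteq> V"
  shows "set w \<subseteq> {1..N} \<Longrightarrow> fl f w ` V \<subseteq> V"
proof (induction w)
  case Nil then show ?case by simp
next
  case (Cons a w)
  have "fl f (a#w) ` V = f a ` (fl f w ` V)" by (simp add: fl_Cons image_comp)
  also have "\<dots> \<subseteq> f a ` V" using Cons by (intro image_mono) auto
  also have "\<dots> \<subseteq> V" using V Cons.prems by auto
  finally show ?case .
qed

lemma fl_disj:
  assumes V: "\<forall>i\<in>{1..N}. f i ` V \<subseteq> V"
    and D: "\<forall>i\<in>{1..N}. \<forall>j\<in>{1..N}. i \<noteq> j \<longrightarrow> f i ` V \<inter> f j ` V = {}"
  shows "set w \<subseteq> {1..N} \<Longrightarrow> set w' \<subseteq> {1..N} \<Longrightarrow> length w = length w' \<Longrightarrow> w \<noteq> w'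
    \<Longrightarrow> fl f w ` V \<inter> fl f w' ` V = {}"
proof (induction w arbitrary: w')
  case Nil then show ?case by simp
next
  case (Cons a w)
  obtain b w'' where w': "w' = b # w''" using Cons.prems(3) by (cases w') auto
  have a: "a \<in> {1..N}" and b: "b \<in> {1..N}" using Cons.prems w' by auto
  have s1: "fl f (a#w) ` V \<subseteq> f a ` V"
  proof -
    have "fl f (a#w) ` V = f a ` (fl f w ` V)" by (simp add: fl_Cons image_comp)
    also have "\<dots> \<subseteq> f a ` V" using fl_U[OF V] Cons.prems(1) by (intro image_mono) auto
    finally show ?thesis .
  qed
  have s2: "fl f w' ` V \<subseteq> f b ` V"
  proof -
    have "fl f w' ` V = f b ` (fl f w'' ` V)" by (simp add: w' fl_Cons image_comp)
    also have "\<dots> \<subseteq> f b ` V" using fl_U[OF V] Cons.prems(2) w' by (intro image_mono) auto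
    finally show ?thesis .
  qed
  show ?case
  proof (cases "a = b")
    case False
    then have "f a ` V \<inter> f b ` V = {}" using D a b by blast
    then show ?thesis using s1 s2 by blast
  next
    case True
    then have ww: "w \<noteq> w''" using Cons.prems(4) w' by simp
    have IH: "fl f w ` V \<inter> fl f w'' ` V = {}"
      using Cons.IH[of w''] Cons.prems w' ww by auto
    show ?thesis
    proof (rule ccontr)
      assume "fl f (a # w) ` V \<inter> fl f w' ` V \<noteq> {}"
      then obtain x y where xy: "x \<in> V" "y \<in> V" "fl f (a#w) x = fl f w' y" by blast
      then have "f a (fl f w x) = f a (fl f w'' y)" using True w' by (simp add: fl_Cons)
      then have "fl f w x = fl f w'' y" using fsim a by (metis dist_eq_0_iff mult_eq_0_iff cpos[OF a] less_irrefl)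
      then show False using IH xy by blast
    qed
  qed
qed

end


lemma block_prod:
  fixes h :: "nat \<Rightarrow> real"
  shows "(\<Prod>i<k*L. h i) = (\<Prod>j<k. \<Prod>t<L. h (t + j*L))"
proof -
  have "(\<Prod>i<k*L. h i) = (\<Prod>j<k. \<Prod>i\<in>{j*L..<j*L+L}. h i)" by (rule prod.nat_group[symmetric])
  also have "\<dots> = (\<Prod>j<k. \<Prod>t<L. h (t + j*L))"
  proof (rule prod.cong[OF refl])
    fix j
    have "(\<Prod>i\<in>{0 + j*L..<L + j*L}. h i) = (\<Prod>t\<in>{0..<L}. h (t + j*L))" by (rule prod.shift_bounds_nat_ivl)
    then show "(\<Prod>i\<in>{j*L..<j*L+L}. h i) = (\<Prod>t<L. h (t + j*L))" by (simp add: add.commute atLeast0LessThan)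
  qed
  finally show ?thesis .
qed

context thm7 begin

lemma lower_pos:
  assumes sosc: "SOSC N f" and s: "0 < s" and Sc1: "1 < (\<Sum>i=1..N. c i powr s)"
  shows "0 < hausdorff_measure max_dist s (fractal_graph N f g)"
proof -
  obtain V where V: "open V" "\<forall>i\<in>{1..N}. f i ` V \<subseteq> V"
      "\<forall>i\<in>{1..N}. \<forall>j\<in>{1..N}. i \<noteq> j \<longrightarrow> f i ` V \<inter> f j ` V = {}" "V \<inter> attractor N f \<noteq> {}"
    using sosc unfolding SOSC_def by blast
  define A where "A = attractor N f"
  have A: "A = F.P" using F.attractor_eq by (simp add: A_def)
  have Acomp: "compact A" using F.P_compact A by simp
  obtain a where a: "a \<in> V" "a \<in> A" using V(4) by (auto simp: A_def)
  obtain \<alpha> where \<alpha>: "\<alpha> \<in> code_space N" "a = address f \<alpha>" using a(2) A by (auto simp: F.P_def)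
  obtain \<epsilon> where \<epsilon>: "0 < \<epsilon>" "ball a \<epsilon> \<subseteq> V" using V(1) a(1) openE by blast
  obtain n1 where n1: "qf^n1 < \<epsilon> / (F.Bd + 1)"
    using real_arch_pow_inv[OF _ qf(1), of "\<epsilon>/(F.Bd+1)"] \<epsilon> F.Bd_nn by auto
  have n1': "qf^n1 * F.Bd < \<epsilon>"
  proof -
    have "qf^n1 * F.Bd \<le> qf^n1 * (F.Bd + 1)" using F.q0 by (simp add: mult_left_mono)
    also have "\<dots> < \<epsilon>" using n1 F.Bd_nn by (simp add: pos_less_divide_eq)
    finally show ?thesis .
  qed
  define \<omega> where "\<omega> = map \<alpha> [0..<n1]"
  have \<omega>set: "set \<omega> \<subseteq> {1..N}" using \<alpha> by (auto simp: \<omega>_def code_space_def)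
  have \<omega>len: "length \<omega> = n1" by (simp add: \<omega>_def)
  have \<omega>V: "fl f \<omega> x \<in> V" if xA: "x \<in> A" for x
  proof -
    obtain \<beta> where \<beta>: "\<beta> \<in> code_space N" "x = address f \<beta>" using xA A by (auto simp: F.P_def)
    define \<gamma> where "\<gamma> i = (if i < n1 then \<alpha> i else \<beta> (i - n1))" for i
    have \<gamma>c: "\<gamma> \<in> code_space N" using \<alpha> \<beta> by (auto simp: \<gamma>_def code_space_def)
    have "address f \<gamma> = fl f \<omega> (address f (\<lambda>j. \<gamma> (j + length \<omega>)))"
      by (rule F.addr_prefix[OF \<gamma>c]) (simp add: \<gamma>_def \<omega>_def)
    moreover have "(\<lambda>j. \<gamma> (j + length \<omega>)) = \<beta>" by (simp add: \<gamma>_def \<omega>_def)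
    ultimately have eq: "address f \<gamma> = fl f \<omega> x" using \<beta> by simp
    have "dist (address f \<alpha>) (address f \<gamma>) \<le> qf^n1 * F.Bd"
      by (rule F.addr_agree[OF \<alpha>(1) \<gamma>c]) (simp add: \<gamma>_def)
    then have "fl f \<omega> x \<in> ball a \<epsilon>" using eq \<alpha> n1' by simp
    then show ?thesis using \<epsilon> by blast
  qed
  define Sc where "Sc = (\<Sum>i=1..N. c i powr s)"
  define c\<omega> where "c\<omega> = wt c \<omega>"
  have c\<omega>: "0 < c\<omega>" unfolding c\<omega>_def by (rule wt_c_pos[OF \<omega>set])
  obtain n0 where n0: "1 / c\<omega> powr s < Sc^n0" using real_arch_pow[OF Sc1[folded Sc_def]] by blast
  define n2 where "n2 = Suc n0"
  have n2: "1 \<le> c\<omega> powr s * Sc^n2"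
  proof -
    have "Sc^n0 \<le> Sc^n2" unfolding n2_def using Sc1 by (simp add: Sc_def)
    then have "1 / c\<omega> powr s < Sc^n2" using n0 by linarith
    then show ?thesis using c\<omega> by (simp add: divide_less_eq mult.commute less_imp_le)
  qed
  define W2 where "W2 = W n2"
  define m where "m = card W2"
  obtain hb where hb: "bij_betw hb {0..<m} W2"
    using ex_bij_betw_nat_finite[OF finW] unfolding m_def W2_def by blast
  have hbW: "hb j \<in> W2" if "j < m" for j using hb that by (auto simp: bij_betw_def)
  have hb_inj: "hb j \<noteq> hb j'" if "j < m" "j' < m" "j \<noteq> j'" for j j'
    using hb that by (auto simp: bij_betw_def inj_on_def)
  have W2ne: "replicate n2 1 \<in> W2" using N by (auto simp: W2_def W_def)
  have m0: "0 < m" unfolding m_def using W2ne finW[of n2] W2_def card_gt_0_iff by blast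
  define L where "L = n2 + n1"
  have L0: "0 < L" by (simp add: L_def n2_def)
  define blk where "blk j = hb j @ \<omega>" for j
  have hb_len: "length (hb j) = n2" "set (hb j) \<subseteq> {1..N}" if "j < m" for j
    using hbW[OF that] by (auto simp: W2_def W_def)
  have blk_len: "length (blk j) = L" if "j < m" for j using hb_len[OF that] by (simp add: blk_def L_def \<omega>len)
  have blk_set: "set (blk j) \<subseteq> {1..N}" if "j < m" for j using hb_len[OF that] \<omega>set by (simp add: blk_def)
  define ac where "ac j = wt c (blk j)" for j
  have ac: "\<forall>j<m. 0 < ac j \<and> ac j < 1"
  proof (intro allI impI conjI)
    fix j assume j: "j < m"
    show "0 < ac j" unfolding ac_def by (rule wt_c_pos[OF blk_set[OF j]])
    have "blk j \<noteq> []" using blk_len[OF j] L0 by auto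
    moreover have "\<forall>i\<in>set (blk j). 0 < c i \<and> c i < 1" using blk_set[OF j] c by auto
    ultimately show "ac j < 1" unfolding ac_def by (rule wt_lt1)
  qed
  have Sac: "1 \<le> (\<Sum>j<m. ac j powr s)"
  proof -
    have "(\<Sum>j<m. ac j powr s) = (\<Sum>j\<in>{0..<m}. wt (\<lambda>i. c i powr s) (hb j) * c\<omega> powr s)"
    proof (rule sum.cong)
      show "{..<m} = {0..<m}" by auto
      fix j assume "j \<in> {0..<m}"
      then have j: "j < m" by simp
      have nn: "\<forall>i\<in>set (hb j). 0 \<le> c i" using hb_len(2)[OF j] cpos by (auto simp: less_imp_le)
      have "ac j powr s = (wt c (hb j) * c\<omega>) powr s" by (simp add: ac_def blk_def wt_append c\<omega>_def)
      also have "\<dots> = wt c (hb j) powr s * c\<omega> powr s"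
        using wt_nonneg'[OF nn] c\<omega> by (simp add: powr_mult)
      also have "wt c (hb j) powr s = wt (\<lambda>i. c i powr s) (hb j)" by (rule wt_powr[OF nn])
      finally show "ac j powr s = wt (\<lambda>i. c i powr s) (hb j) * c\<omega> powr s" .
    qed
    also have "\<dots> = (\<Sum>w\<in>W2. wt (\<lambda>i. c i powr s) w * c\<omega> powr s)" by (rule sum.reindex_bij_betw[OF hb])
    also have "\<dots> = (\<Sum>w\<in>W2. wt (\<lambda>i. c i powr s) w) * c\<omega> powr s" by (simp add: sum_distrib_right)
    also have "(\<Sum>w\<in>W2. wt (\<lambda>i. c i powr s) w) = Sc^n2"
      unfolding W2_def W_def Sc_def by (rule sum_wt_lists) simp
    finally show ?thesis using n2 by (simp add: mult.commute)
  qed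
  define \<Phi> where "\<Phi> u i = blk (u (i div L)) ! (i mod L)" for u i
  have \<Phi>c: "\<Phi> u \<in> code_space N" if u: "\<forall>i. u i < m" for u
    unfolding code_space_def
  proof (intro CollectI allI)
    fix i
    have "i mod L < length (blk (u (i div L)))" using blk_len u L0 by simp
    then have "blk (u (i div L)) ! (i mod L) \<in> set (blk (u (i div L)))" by (rule nth_mem)
    then show "\<Phi> u i \<in> {1..N}" using blk_set u unfolding \<Phi>_def by blast
  qed
  have \<Phi>shift: "(\<lambda>j. \<Phi> u (j + k * L)) = \<Phi> (\<lambda>i. u (i + k))" for u k
    using L0 by (intro ext) (simp add: \<Phi>_def add.commute)
  have \<Phi>agree: "\<forall>i<k*L. \<Phi> u i = \<Phi> v i" if "\<forall>i<k. u i = v i" for u v k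
  proof (intro allI impI)
    fix i assume "i < k*L"
    then have "i div L < k" by (rule less_mult_imp_div_less)
    then show "\<Phi> u i = \<Phi> v i" using that by (simp add: \<Phi>_def)
  qed
  have \<Phi>blk: "\<forall>i<length (blk (u 0)). \<Phi> u i = blk (u 0) ! i" if u: "\<forall>i. u i < m" for u
    using blk_len u by (simp add: \<Phi>_def)
  define K where "K j = fl f (blk j) ` A" for j
  have Kcomp: "compact (K j)" if j: "j < m" for j
  proof -
    have "(wt c (blk j))-lipschitz_on A (fl f (blk j))"
      by (rule lipschitz_onI) (use fl_scale[OF blk_set[OF j]] wt_c_pos[OF blk_set[OF j]] in auto)
    then have "continuous_on A (fl f (blk j))" by (rule lipschitz_on_continuous_on)
    then show ?thesis unfolding K_def using Acomp by (rule compact_continuous_image)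
  qed
  have Ksub: "K j \<subseteq> fl f (hb j) ` V" if "j < m" for j
  proof
    fix z assume "z \<in> K j"
    then obtain x where x: "x \<in> A" "z = fl f (blk j) x" by (auto simp: K_def)
    then have "z = fl f (hb j) (fl f \<omega> x)" by (simp add: blk_def fl_append)
    then show "z \<in> fl f (hb j) ` V" using \<omega>V[OF x(1)] by blast
  qed
  have Kdisj: "K j \<inter> K j' = {}" if "j < m" "j' < m" "j \<noteq> j'" for j j'
  proof -
    have "fl f (hb j) ` V \<inter> fl f (hb j') ` V = {}"
      using fl_disj[OF V(2) V(3)] hb_len[OF that(1)] hb_len[OF that(2)] hb_inj[OF that] by auto
    then show ?thesis using Ksub[OF that(1)] Ksub[OF that(2)] by blast
  qed
  define Pr where "Pr = {(j, j'). j < m \<and> j' < m \<and> j \<noteq> j'}"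
  have finPr: "finite Pr" by (rule finite_subset[of _ "{..<m} \<times> {..<m}"]) (auto simp: Pr_def)
  have "\<forall>p\<in>Pr. \<exists>d>0. \<forall>x\<in>K (fst p). \<forall>y\<in>K (snd p). d \<le> dist x y"
  proof
    fix p assume "p \<in> Pr"
    then obtain j j' where p: "p = (j, j')" "j < m" "j' < m" "j \<noteq> j'" by (auto simp: Pr_def)
    show "\<exists>d>0. \<forall>x\<in>K (fst p). \<forall>y\<in>K (snd p). d \<le> dist x y"
      using compact_sep[OF Kcomp[OF p(2)] Kcomp[OF p(3)] Kdisj[OF p(2-4)]] p(1) by simp
  qed
  then obtain dd where dd: "\<forall>p\<in>Pr. dd p > 0 \<and> (\<forall>x\<in>K (fst p). \<forall>y\<in>K (snd p). dd p \<le> dist x y)"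
    by (metis (no_types, lifting) bchoice)
  define gp where "gp = Min (insert 1 (dd ` Pr))"
  have gp0: "0 < gp" unfolding gp_def using finPr dd by (subst Min_gr_iff) auto
  have gap: "gp \<le> dist x y" if "j < m" "j' < m" "j \<noteq> j'" "x \<in> K j" "y \<in> K j'" for j j' x y
  proof -
    have p: "(j, j') \<in> Pr" using that by (simp add: Pr_def)
    have "gp \<le> dd (j, j')" unfolding gp_def using finPr p by (intro Min_le) auto
    also have "\<dots> \<le> dist x y" using dd p that by auto
    finally show ?thesis .
  qed
  have addrK: "address f (\<Phi> u) \<in> K (u 0)" if u: "\<forall>i. u i < m" for u
  proof -
    have e1: "address f (\<Phi> u) = fl f (blk (u 0)) (address f (\<lambda>j. \<Phi> u (j + length (blk (u 0)))))"
      by (rule F.addr_prefix[OF \<Phi>c[OF u] \<Phi>blk[OF u]])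
    have e2: "(\<lambda>j. \<Phi> u (j + length (blk (u 0)))) = \<Phi> (\<lambda>i. u (i + 1))"
      using \<Phi>shift[of u 1] blk_len u by simp
    have "address f (\<Phi> (\<lambda>i. u (i + 1))) \<in> A" using \<Phi>c[of "\<lambda>i. u (i + 1)"] u A by (simp add: F.P_def)
    moreover have "address f (\<Phi> u) = fl f (blk (u 0)) (address f (\<Phi> (\<lambda>i. u (i + 1))))"
      using e1 unfolding e2 .
    ultimately show ?thesis unfolding K_def by (rule rev_image_eqI)
  qed
  have base: "gp \<le> dist (address f (\<Phi> u)) (address f (\<Phi> v))"
    if u: "\<forall>i. u i < m" and v: "\<forall>i. v i < m" and uv: "u 0 \<noteq> v 0" for u v
    using gap[OF u[rule_format] v[rule_format] uv addrK[OF u] addrK[OF v]] .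
  have scale: "dist (address f (\<Phi> u)) (address f (\<Phi> v)) =
      (\<Prod>j<k. ac (u j)) * dist (address f (\<Phi> (\<lambda>i. u (i + k)))) (address f (\<Phi> (\<lambda>i. v (i + k))))"
    if u: "\<forall>i. u i < m" and v: "\<forall>i. v i < m" and uv: "\<forall>i<k. u i = v i" for u v k
  proof -
    define pre where "pre = map (\<Phi> u) [0..<k*L]"
    have lp: "length pre = k*L" by (simp add: pre_def)
    have pu: "\<forall>i<length pre. \<Phi> u i = pre ! i" by (simp add: pre_def)
    have pv: "\<forall>i<length pre. \<Phi> v i = pre ! i" using \<Phi>agree[OF uv] by (simp add: pre_def)
    have pset: "set pre \<subseteq> {1..N}" using \<Phi>c[OF u] by (auto simp: pre_def code_space_def)
    have eu: "address f (\<Phi> u) = fl f pre (address f (\<Phi> (\<lambda>i. u (i + k))))"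
      using F.addr_prefix[OF \<Phi>c[OF u] pu] \<Phi>shift[of u k] lp by simp
    have ev: "address f (\<Phi> v) = fl f pre (address f (\<Phi> (\<lambda>i. v (i + k))))"
      using F.addr_prefix[OF \<Phi>c[OF v] pv] \<Phi>shift[of v k] lp by simp
    have wp: "wt c pre = (\<Prod>j<k. ac (u j))"
    proof -
      have "wt c pre = (\<Prod>i<k*L. c (\<Phi> u i))" by (simp add: wt_def pre_def)
      also have "\<dots> = (\<Prod>j<k. \<Prod>t<L. c (\<Phi> u (t + j*L)))" by (rule block_prod)
      also have "\<dots> = (\<Prod>j<k. ac (u j))"
      proof (rule prod.cong[OF refl])
        fix j
        have "(\<Prod>t<L. c (\<Phi> u (t + j*L))) = (\<Prod>t<L. c (blk (u j) ! t))"
          using L0 by (intro prod.cong refl) (simp add: \<Phi>_def)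
        also have "\<dots> = ac (u j)" using blk_len u by (simp add: ac_def wt_def)
        finally show "(\<Prod>t<L. c (\<Phi> u (t + j*L))) = ac (u j)" .
      qed
      finally show ?thesis .
    qed
    show ?thesis using eu ev fl_scale[OF pset] wp by simp
  qed
  have sep: "gp * (\<Prod>i<k. ac (u i)) \<le> max_dist (\<Psi> u) (\<Psi> v)"
    if u: "\<forall>i. u i < m" and v: "\<forall>i. v i < m" and uv: "\<forall>i<k. u i = v i" "u k \<noteq> v k"
    and \<Psi>: "\<Psi> = (\<lambda>u. (address f (\<Phi> u), fractal_transformation N f g (address f (\<Phi> u))))" for u v k \<Psi>
  proof -
    have nn: "0 \<le> (\<Prod>i<k. ac (u i))" using ac u by (intro prod_nonneg) (auto simp: less_imp_le)
    have "gp * (\<Prod>i<k. ac (u i)) = (\<Prod>i<k. ac (u i)) * gp" by simp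
    also have "\<dots> \<le> (\<Prod>i<k. ac (u i)) * dist (address f (\<Phi> (\<lambda>i. u (i + k)))) (address f (\<Phi> (\<lambda>i. v (i + k))))"
      using nn base[of "\<lambda>i. u (i + k)" "\<lambda>i. v (i + k)"] u v uv(2) by (intro mult_left_mono) auto
    also have "\<dots> = dist (address f (\<Phi> u)) (address f (\<Phi> v))" using scale[OF u v uv(1)] by simp
    also have "\<dots> \<le> max_dist (\<Psi> u) (\<Psi> v)" by (simp add: \<Psi> max_dist_def)
    finally show ?thesis .
  qed
  define \<Psi> where "\<Psi> u = (address f (\<Phi> u), fractal_transformation N f g (address f (\<Phi> u)))" for u
  have \<Psi>G: "\<Psi> u \<in> fractal_graph N f g" if u: "\<forall>i. u i < m" for u
  proof -
    have "address f (\<Phi> u) \<in> attractor N f" using \<Phi>c[OF u] A by (simp add: A_def F.P_def)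
    then show ?thesis unfolding \<Psi>_def fractal_graph_def by blast
  qed
  have lowerINF: "ennreal (gp powr s / 2) \<le> (INF U\<in>{U. delta_cover max_dist 1 (fractal_graph N f g) U}. (\<Sum>k. diam_pow max_dist s (U k)))"
  proof (rule INF_greatest)
    fix U assume "U \<in> {U. delta_cover max_dist 1 (fractal_graph N f g) U}"
    then have dc: "fractal_graph N f g \<subseteq> (\<Union>k. U k)" "\<forall>k. \<forall>x\<in>U k. \<forall>y\<in>U k. max_dist x y \<le> 1"
      by (auto simp: delta_cover_def)
    show "ennreal (gp powr s / 2) \<le> (\<Sum>k. diam_pow max_dist s (U k))"
    proof (rule mass[where \<Psi>=\<Psi> and a=ac and \<delta>=1])
      show "0 < m" by (rule m0)
      show "0 < s" by (rule s)
      show "0 < gp" by (rule gp0)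
      show "\<forall>j<m. 0 < ac j \<and> ac j < 1" by (rule ac)
      show "1 \<le> (\<Sum>j<m. ac j powr s)" by (rule Sac)
      show "gp * (\<Prod>i<k. ac (u i)) \<le> max_dist (\<Psi> u) (\<Psi> v)"
        if "\<forall>i. u i < m" "\<forall>i. v i < m" "\<forall>i<k. u i = v i" "u k \<noteq> v k" for u v k
        by (rule sep[OF that]) (simp add: \<Psi>_def[abs_def])
      show "\<Psi> u \<in> (\<Union>k. U k)" if "\<forall>i. u i < m" for u using \<Psi>G[OF that] dc(1) by blast
      show "max_dist x y \<le> 1" if "x \<in> U k" "y \<in> U k" for k x y using dc(2) that by blast
    qed
  qed
  have "ennreal (gp powr s / 2) \<le> hausdorff_measure max_dist s (fractal_graph N f g)"
    unfolding hausdorff_measure_def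
    by (rule order.trans[OF lowerINF]) (rule SUP_upper, simp)
  moreover have "0 < ennreal (gp powr s / 2)" using gp0 by simp
  ultimately show ?thesis by (rule order.strict_trans2[rotated])
qed

end


context thm7 begin

lemma H0_pos: "0 < hausdorff_measure max_dist 0 (fractal_graph N f g)"
proof -
  obtain x where x: "x \<in> attractor N f" using F.P_ne F.attractor_eq by auto
  have xG: "(x, fractal_transformation N f g x) \<in> fractal_graph N f g"
    using x unfolding fractal_graph_def by blast
  have "1 \<le> (INF U\<in>{U. delta_cover max_dist 1 (fractal_graph N f g) U}. (\<Sum>k. diam_pow max_dist 0 (U k)))"
  proof (rule INF_greatest)
    fix U assume "U \<in> {U. delta_cover max_dist 1 (fractal_graph N f g) U}"
    then have "fractal_graph N f g \<subseteq> (\<Union>k. U k)" by (simp add: delta_cover_def)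
    then obtain k0 where k0: "U k0 \<noteq> {}" using xG by blast
    have "(\<Sum>k\<in>{k0}. diam_pow max_dist 0 (U k)) \<le> (\<Sum>k. diam_pow max_dist 0 (U k))"
      by (rule sum_le_suminf) auto
    then show "1 \<le> (\<Sum>k. diam_pow max_dist 0 (U k))" using k0 by (simp add: diam_pow_def)
  qed
  also have "\<dots> \<le> hausdorff_measure max_dist 0 (fractal_graph N f g)"
    unfolding hausdorff_measure_def by (rule SUP_upper) simp
  finally show ?thesis by (rule order.strict_trans2[rotated]) simp
qed

end

theorem mainTheorem7:
  fixes N :: nat
    and f :: "nat \<Rightarrow> 'a::complete_space \<Rightarrow> 'a"
    and g :: "nat \<Rightarrow> 'b::complete_space \<Rightarrow> 'b"
    and c r :: "nat \<Rightarrow> real"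
    and s0 t0 :: real
  assumes "N \<ge> 1"
    and "\<forall>i\<in>{1..N}. 0 < c i \<and> c i < 1"
    and "\<forall>i\<in>{1..N}. 0 < r i \<and> r i < 1"
    and "\<forall>i\<in>{1..N}. \<forall>x x'. dist (f i x) (f i x') = c i * dist x x'"
    and "\<forall>i\<in>{1..N}. \<forall>y y'. dist (g i y) (g i y') \<le> r i * dist y y'"
    and "\<forall>i\<in>{1..N}. c i \<le> r i"
    and "SOSC N f"
    and "(\<Sum>i=1..N. r i powr t0) = 1"
    and "(\<Sum>i=1..N. c i powr s0) = 1"
  shows "ereal s0 \<le> hausdorff_dim max_dist (fractal_graph N f g) \<and>
         hausdorff_dim max_dist (fractal_graph N f g) \<le> ereal t0"
proof -
  interpret thm7 N f g c r
    by (rule thm7.intro) (fact assms)+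
  have ne: "{1..N} \<noteq> {}" using assms(1) by simp
  have t0: "0 \<le> t0"
  proof (rule ccontr)
    assume "\<not> 0 \<le> t0"
    then have "t0 < 0" by simp
    then have "(\<Sum>i=1..N. 1::real) < (\<Sum>i=1..N. r i powr t0)"
    proof (intro sum_strict_mono[OF finite_atLeastAtMost ne])
      fix i assume i: "i \<in> {1..N}"
      have "r i powr 0 < r i powr t0" using rpos[OF i] rlt[OF i] \<open>t0 < 0\<close> by (rule powr_less_mono')
      then show "1 < r i powr t0" using rpos[OF i] by simp
    qed
    then show False using assms(1,8) by simp
  qed
  have upper: "hausdorff_dim max_dist (fractal_graph N f g) \<le> ereal t0"
  proof (rule ereal_le_epsilon2)
    fix e :: real assume e: "0 < e"
    have s: "0 < t0 + e" using t0 e by simp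
    have "(\<Sum>i=1..N. r i powr (t0 + e)) < (\<Sum>i=1..N. r i powr t0)"
    proof (rule sum_strict_mono[OF finite_atLeastAtMost ne])
      fix i assume i: "i \<in> {1..N}"
      show "r i powr (t0 + e) < r i powr t0" using rpos[OF i] rlt[OF i] by (rule powr_less_mono') (use e in simp)
    qed
    then have "hausdorff_measure max_dist (t0 + e) (fractal_graph N f g) = 0"
      using upper_zero[OF s] assms(8) by simp
    then have "ereal (t0 + e) \<in> {ereal s |s. s \<ge> 0 \<and> hausdorff_measure max_dist s (fractal_graph N f g) = 0}"
      using s by auto
    then have "hausdorff_dim max_dist (fractal_graph N f g) \<le> ereal (t0 + e)"
      unfolding hausdorff_dim_def by (rule Inf_lower)
    then show "hausdorff_dim max_dist (fractal_graph N f g) \<le> ereal t0 + ereal e" by simp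
  qed
  have lower: "ereal s0 \<le> hausdorff_dim max_dist (fractal_graph N f g)"
    unfolding hausdorff_dim_def
  proof (rule Inf_greatest)
    fix x assume "x \<in> {ereal s |s. s \<ge> 0 \<and> hausdorff_measure max_dist s (fractal_graph N f g) = 0}"
    then obtain s where s: "x = ereal s" "0 \<le> s" "hausdorff_measure max_dist s (fractal_graph N f g) = 0"
      by blast
    show "ereal s0 \<le> x"
    proof (rule ccontr)
      assume "\<not> ereal s0 \<le> x"
      then have ss0: "s < s0" using s by simp
      show False
      proof (cases "s = 0")
        case True
        then show False using H0_pos s by simp
      next
        case False
        then have sp: "0 < s" using s by simp
        have "(\<Sum>i=1..N. c i powr s0) < (\<Sum>i=1..N. c i powr s)"
        proof (rule sum_strict_mono[OF finite_atLeastAtMost ne])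
          fix i assume i: "i \<in> {1..N}"
          show "c i powr s0 < c i powr s" using cpos[OF i] clt[OF i] ss0 by (rule powr_less_mono')
        qed
        then have "1 < (\<Sum>i=1..N. c i powr s)" using assms(9) by simp
        then have "0 < hausdorff_measure max_dist s (fractal_graph N f g)" by (rule lower_pos[OF assms(7) sp])
        then show False using s by simp
      qed
    qed
  qed
  show ?thesis using upper lower by blast
qed


end
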